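(* Consider the binary instrumental variable model described in the context, with both treatment and outcome possibly missing: $R^D\in\{0,1\}$ indicates that $D$ is observed and $R^Y\in\{0,1\}$ that $Y$ is observed, so the observed data are $(Z,R^D,R^D D,R^Y,R^Y Y)$. Assume the IV assumptions and that $R^D\perp\!\!\!\perp (Z,Y)\mid (U,D)$. Then: (1ZD$\oplus$2UD) If $R^Y\perp\!\!\!\perp (U,Y)\mid (Z,D,R^D)$, $\mathbb{P}(R^D=1\mid U=c,D=d)>0$ for $d=0,1$, and $\mathbb{P}(R^Y=1\mid Z=z,D=d,R^D=1)>0$ for all $z$ and $d$, then the CACE is identifiable. (1UD$\oplus$2UD) If $R^Y\perp\!\!\!\perp (Z,Y)\mid (U,D,R^D)$, and $\mathbb{P}(R^D=1\mid U=c,D=d)>0$ and $\mathbb{P}(R^Y=1\mid U=c,D=d,R^D=1)>0$ for $d=0,1$, then the CACE is identifiable. (1DY$\oplus$2UD) If $R^Y\perp\!\!\!\perp (Z,U)\mid (D,Y,R^D)$, $Y$ is binary, noncompliance is two-sided, $\mathbb{P}(R^D=1\mid U=c,D=d)>0$ for $d=0,1$, $\mathbb{P}(R^Y=1\mid D=d,Y=y,R^D=1)>0$ for all $d$ and $y$, and $Y\not\!\perp\!\!\!\perp Z\mid (D=d,R^D=1)$ for $d=0,1$, then the CACE is identifiable. (1ZY$\oplus$2UD) If $R^Y\perp\!\!\!\perp (U,D)\mid (Z,Y,R^D)$, $Y$ is binary, noncompliance is two-sided, $\mathbb{P}(R^D=1\mid U=c,D=d)>0$ for $d=0,1$, $\mathbb{P}(R^Y=1\mid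 Z=z,Y=y,R^D=1)>0$ for all $z$ and $y$, and $Y\not\!\perp\!\!\!\perp D\mid (Z=z,R^D=1)$ for $z=0,1$, then the CACE is identifiable. (1UY$\oplus$2UD) If $R^Y\perp\!\!\!\perp (Z,D)\mid (U,Y,R^D)$, $Y$ is binary, $\mathbb{P}(R^D=1\mid U=c,D=d)>0$ for $d=0,1$, and $\mathbb{P}(R^Y=1\mid U=c,Y=y,R^D=1)>0$ for $y=0,1$, then the CACE is identifiable.
   Context: $Z\in\{0,1\}$ is a binary instrument, $D\in\{0,1\}$ the treatment received, $Y$ the outcome (real-valued; "binary $Y$" means $Y\in\{0,1\}$). Potential values $D(z),Y(z)$ for $z=0,1$ are defined with respect to the instrument; observed values are $D=ZD(1)+(1-Z)D(0)$ and $Y=ZY(1)+(1-Z)Y(0)$. The latent compliance status $U$ is $a$ (always-taker) if $D(1)=D(0)=1$, $c$ (complier) if $D(1)=1,D(0)=0$, $d$ (defier) if $D(1)=0,D(0)=1$, $n$ (never-taker) if $D(1)=D(0)=0$. IV assumptions: (1) $Z\perp\!\!\!\perp\{D(1),D(0),Y(1),Y(0)\}$; (2) $D(1)\ge D(0)$ for all units (no defiers); (3) $\mathbb{E}\{D(1)-D(0)\}\neq0$; (4) $Y(1)=Y(0)$ for units with $U\in\{a,n\}$. The complier average causal effect is $\mathrm{CACE}=\mathbb{E}\{Y(1)-Y(0)\mid U=c\}$. One-sided noncompliance means $D(0)=0$ for all units (only compliers and never-takers); two-sided noncompliance is the general case in which units in both arms may fail to comply (always-takers and never-takers may both be present). Independence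 statements refer to the joint distribution of $(Z,U,D,Y,R^D,R^Y)$. The CACE is identifiable if it is uniquely determined by the distribution of the observed data among all joint distributions satisfying the stated assumptions. *)

theory Defs
  imports "HOL-Probability.Probability"
begin

datatype comp = Always | Complier | Defier | Never

text \<open>A unit of the full data: (Z, D(0), D(1), Y(0), Y(1), R^D, R^Y).
  Booleans encode the values 0/1 (True = 1).\<close>
type_synonym unit_data = "bool \<times> bool \<times> bool \<times> real \<times> real \<times> bool \<times> bool"

definition full_space :: "unit_data measure" where
  "full_space = count_space UNIV \<Otimes>\<^sub>M count_space UNIV \<Otimes>\<^sub>M count_space UNIV \<Otimes>\<^sub>M
                borel \<Otimes>\<^sub>M borel \<Otimes>\<^sub>M count_space UNIV \<Otimes>\<^sub>M count_space UNIV"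

definition Zv :: "unit_data \<Rightarrow> bool" where "Zv w = fst w"
definition D0v :: "unit_data \<Rightarrow> bool" where "D0v w = fst (snd w)"
definition D1v :: "unit_data \<Rightarrow> bool" where "D1v w = fst (snd (snd w))"
definition Y0v :: "unit_data \<Rightarrow> real" where "Y0v w = fst (snd (snd (snd w)))"
definition Y1v :: "unit_data \<Rightarrow> real" where "Y1v w = fst (snd (snd (snd (snd w))))"
definition RDv :: "unit_data \<Rightarrow> bool" where "RDv w = fst (snd (snd (snd (snd (snd w)))))"
definition RYv :: "unit_data \<Rightarrow> bool" where "RYv w = snd (snd (snd (snd (snd (snd w)))))"

definition Dv :: "unit_data \<Rightarrow> bool" where "Dv w = (if Zv w then D1v w else D0v w)"
definition Yv :: "unit_data \<Rightarrow> real" where "Yv w = (if Zv w then Y1v w else Y0v w)"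

definition Uv :: "unit_data \<Rightarrow> comp" where
  "Uv w = (if D1v w \<and> D0v w then Always
           else if D1v w \<and> \<not> D0v w then Complier
           else if \<not> D1v w \<and> D0v w then Defier else Never)"

definition obs :: "unit_data \<Rightarrow> bool \<times> bool \<times> bool \<times> bool \<times> real" where
  "obs w = (Zv w, RDv w, RDv w \<and> Dv w, RYv w, if RYv w then Yv w else 0)"

definition obs_space :: "(bool \<times> bool \<times> bool \<times> bool \<times> real) measure" where
  "obs_space = count_space UNIV \<Otimes>\<^sub>M count_space UNIV \<Otimes>\<^sub>M count_space UNIV \<Otimes>\<^sub>M
               count_space UNIV \<Otimes>\<^sub>M borel"

definition obs_law :: "unit_data measure \<Rightarrow> (bool \<times> bool \<times> bool \<times> bool \<times> real) measure" where
  "obs_law P = distr P obs_space obs"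

definition cprob :: "'o measure \<Rightarrow> ('o \<Rightarrow> bool) \<Rightarrow> ('o \<Rightarrow> bool) \<Rightarrow> real" where
  "cprob P A B = measure P {w \<in> space P. A w \<and> B w} / measure P {w \<in> space P. B w}"

definition indep_given ::
  "'o measure \<Rightarrow> ('o \<Rightarrow> 'x) \<Rightarrow> 'x measure \<Rightarrow> ('o \<Rightarrow> 'y) \<Rightarrow> 'y measure \<Rightarrow> ('o \<Rightarrow> bool) \<Rightarrow> bool" where
  "indep_given P X MX Y MY E \<longleftrightarrow>
     (\<forall>A \<in> sets MX. \<forall>B \<in> sets MY.
        measure P {w \<in> space P. X w \<in> A \<and> Y w \<in> B \<and> E w} * measure P {w \<in> space P. E w}
        = measure P {w \<in> space P. X w \<in> A \<and> E w} * measure P {w \<in> space P. Y w \<in> B \<and> E w})"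

text \<open>Conditional independence of X and Y given a discretely distributed W
  (all conditioning variables in the theorem take finitely many values a.s.).\<close>
definition cond_indep ::
  "'o measure \<Rightarrow> ('o \<Rightarrow> 'x) \<Rightarrow> 'x measure \<Rightarrow> ('o \<Rightarrow> 'y) \<Rightarrow> 'y measure \<Rightarrow> ('o \<Rightarrow> 'w) \<Rightarrow> bool" where
  "cond_indep P X MX Y MY W \<longleftrightarrow> (\<forall>v. indep_given P X MX Y MY (\<lambda>w. W w = v))"

definition cace :: "unit_data measure \<Rightarrow> real" where
  "cace P = (\<integral>w. indicator {w. Uv w = Complier} w * (Y1v w - Y0v w) \<partial>P)
            / measure P {w \<in> space P. Uv w = Complier}"

definition base_model :: "unit_data measure \<Rightarrow> bool" where
  "base_model P \<longleftrightarrow>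
     prob_space P \<and> sets P = sets full_space \<and>
     0 < measure P {w \<in> space P. Zv w} \<and> measure P {w \<in> space P. Zv w} < 1 \<and>
     indep_given P Zv (count_space UNIV) (\<lambda>w. (D1v w, D0v w, Y1v w, Y0v w))
        (count_space UNIV \<Otimes>\<^sub>M count_space UNIV \<Otimes>\<^sub>M borel \<Otimes>\<^sub>M borel)
        (\<lambda>w. True) \<and>
     (AE w in P. D0v w \<longrightarrow> D1v w) \<and>
     (\<integral>w. of_bool (D1v w) - of_bool (D0v w) \<partial>P) \<noteq> (0::real) \<and>
     (AE w in P. Uv w \<in> {Always, Never} \<longrightarrow> Y1v w = Y0v w) \<and>
     integrable P Y0v \<and> integrable P Y1v \<and>
     cond_indep P RDv (count_space UNIV) (\<lambda>w. (Zv w, Yv w)) (count_space UNIV \<Otimes>\<^sub>M borel)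
        (\<lambda>w. (Uv w, Dv w)) \<and>
     (\<forall>d. cprob P RDv (\<lambda>w. Uv w = Complier \<and> Dv w = d) > 0)"

definition binary_Y :: "unit_data measure \<Rightarrow> bool" where
  "binary_Y P \<longleftrightarrow> (AE w in P. Yv w \<in> {0, 1})"

definition two_sided :: "unit_data measure \<Rightarrow> bool" where
  "two_sided P \<longleftrightarrow> measure P {w \<in> space P. Uv w = Always} > 0 \<and>
                    measure P {w \<in> space P. Uv w = Never} > 0"

definition cace_identifiable :: "(unit_data measure \<Rightarrow> bool) \<Rightarrow> bool" where
  "cace_identifiable Q \<longleftrightarrow>
     (\<forall>P P'. Q P \<and> Q P' \<and> obs_law P = obs_law P' \<longrightarrow> cace P = cace P')"

end

theory Submission
  imports Defs
begin


lemma space_full: "space full_space = UNIV"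
  by (simp add: full_space_def space_pair_measure)

lemma meas_basic[measurable]:
  "Zv \<in> measurable full_space (count_space UNIV)"
  "D0v \<in> measurable full_space (count_space UNIV)"
  "D1v \<in> measurable full_space (count_space UNIV)"
  "RDv \<in> measurable full_space (count_space UNIV)"
  "RYv \<in> measurable full_space (count_space UNIV)"
  "Y0v \<in> borel_measurable full_space"
  "Y1v \<in> borel_measurable full_space"
  unfolding full_space_def Zv_def D0v_def D1v_def RDv_def RYv_def Y0v_def Y1v_def
  by measurable

lemma meas_derived[measurable]:
  "Dv \<in> measurable full_space (count_space UNIV)"
  "Yv \<in> borel_measurable full_space"
  unfolding Dv_def Yv_def by measurable

lemma pred_bool[measurable]:
  "Measurable.pred full_space Zv" "Measurable.pred full_space D0v"
  "Measurable.pred full_space D1v" "Measurable.pred full_space RDv"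
  "Measurable.pred full_space RYv" "Measurable.pred full_space Dv"
  by (auto simp: pred_def)

lemma finite_comp: "finite (UNIV :: comp set)"
proof -
  have "UNIV = {Always, Complier, Defier, Never}" using comp.exhaust by auto
  then show ?thesis by (metis finite.emptyI finite.insertI)
qed

lemma meas_U[measurable]: "Uv \<in> measurable full_space (count_space UNIV)"
  unfolding Uv_def by measurable

lemma test: "Measurable.pred full_space (\<lambda>w. Zv w = z \<and> Uv w = u \<and> Yv w \<in> B)" if [measurable]: "B \<in> sets borel"
  by measurable


lemma bm_prob: "base_model P \<Longrightarrow> prob_space P" by (simp add: base_model_def)
lemma bm_sets: "base_model P \<Longrightarrow> sets P = sets full_space" by (simp add: base_model_def)
lemma bm_space: "base_model P \<Longrightarrow> space P = UNIV"
  using sets_eq_imp_space_eq[OF bm_sets[of P]] space_full by simp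

lemma ev_sets: "base_model P \<Longrightarrow> Measurable.pred full_space \<Phi> \<Longrightarrow> {w. \<Phi> w} \<in> sets P"
proof -
  assume b: "base_model P" and p: "Measurable.pred full_space \<Phi>"
  have "{w \<in> space full_space. \<Phi> w} \<in> sets full_space" using p by (simp add: pred_def)
  then show ?thesis using bm_sets[OF b] space_full by simp
qed

lemma bm_meas: "base_model P \<Longrightarrow> f \<in> measurable full_space N \<Longrightarrow> f \<in> measurable P N"
  using measurable_cong_sets[OF bm_sets[of P] refl, of N] by simp

lemma int_eq:
  fixes V W :: "'a \<Rightarrow> real"
  assumes P: "prob_space P" and sp: "space P = UNIV" and A: "A \<in> sets P" and G: "G \<in> sets P"
    and V[measurable]: "V \<in> borel_measurable P" and W[measurable]: "W \<in> borel_measurable P" and c: "c \<ge> 0"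
    and h: "\<And>B. B \<in> sets borel \<Longrightarrow> measure P {w. w \<in> A \<and> V w \<in> B} = c * measure P {w. w \<in> G \<and> W w \<in> B}"
  shows "(\<integral>w. indicator A w * V w \<partial>P) = c * (\<integral>w. indicator G w * W w \<partial>P)"
proof -
  interpret prob_space P by fact
  have [measurable]: "A \<in> sets P" "G \<in> sets P" using A G by auto
  define M1 where "M1 = distr (density P (\<lambda>w. ennreal (indicator A w))) borel V"
  define M2 where "M2 = distr (density P (\<lambda>w. ennreal (c * indicator G w))) borel W"
  have pre: "\<And>B f. B \<in> sets borel \<Longrightarrow> f \<in> borel_measurable P \<Longrightarrow> f -` B \<inter> space P \<in> sets P"
    by measurable
  have "M1 = M2"
  proof (rule measure_eqI)
    show "sets M1 = sets M2" by (simp add: M1_def M2_def)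
    fix B assume "B \<in> sets M1"
    then have B[measurable]: "B \<in> sets borel" by (simp add: M1_def)
    have s1: "{w. w \<in> A \<and> V w \<in> B} \<in> sets P" and s2: "{w. w \<in> G \<and> W w \<in> B} \<in> sets P"
      using sets.Int[OF A pre[OF B V]] sets.Int[OF G pre[OF B W]] sp
      by (auto simp: Int_def vimage_def)
    have "emeasure M1 B = (\<integral>\<^sup>+ w. ennreal (indicator A w) * indicator (V -` B \<inter> space P) w \<partial>P)"
      unfolding M1_def by (simp add: emeasure_distr emeasure_density)
    also have "\<dots> = (\<integral>\<^sup>+ w. indicator {w. w \<in> A \<and> V w \<in> B} w \<partial>P)"
      by (rule nn_integral_cong) (auto simp: sp indicator_def)
    also have "\<dots> = ennreal (measure P {w. w \<in> A \<and> V w \<in> B})"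
      using s1 by (simp add: emeasure_eq_measure)
    finally have e1: "emeasure M1 B = ennreal (measure P {w. w \<in> A \<and> V w \<in> B})" .
    have "emeasure M2 B = (\<integral>\<^sup>+ w. ennreal (c * indicator G w) * indicator (W -` B \<inter> space P) w \<partial>P)"
      unfolding M2_def by (simp add: emeasure_distr emeasure_density)
    also have "\<dots> = (\<integral>\<^sup>+ w. ennreal c * indicator {w. w \<in> G \<and> W w \<in> B} w \<partial>P)"
      by (rule nn_integral_cong) (auto simp: sp indicator_def)
    also have "\<dots> = ennreal c * emeasure P {w. w \<in> G \<and> W w \<in> B}"
      using s2 by (simp add: nn_integral_cmult_indicator)
    also have "\<dots> = ennreal (c * measure P {w. w \<in> G \<and> W w \<in> B})"
      using s2 c by (simp add: emeasure_eq_measure ennreal_mult)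
    finally show "emeasure M1 B = emeasure M2 B" using e1 h[OF B] by simp
  qed
  have "(\<integral>y. y \<partial>M1) = (\<integral>w. indicator A w * V w \<partial>P)"
    unfolding M1_def by (simp add: integral_distr integral_density)
  moreover have "(\<integral>y. y \<partial>M2) = c * (\<integral>w. indicator G w * W w \<partial>P)"
    unfolding M2_def using c by (simp add: integral_distr integral_density mult.assoc)
  ultimately show ?thesis using \<open>M1 = M2\<close> by simp
qed


lemma fac_alg: "(a::real) * e = b * c \<Longrightarrow> 0 \<le> a \<Longrightarrow> a \<le> e \<Longrightarrow> a = b / e * c"
  by (cases "e = 0") (auto simp: field_simps)

lemma ig_fac:
  assumes P: "prob_space P" and sp: "space P = UNIV" and ig: "indep_given P X MX Y MY E"
    and A: "A \<in> sets MX" and B: "B \<in> sets MY" and E: "{w. E w} \<in> sets P"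
  shows "measure P {w. X w \<in> A \<and> Y w \<in> B \<and> E w}
       = measure P {w. X w \<in> A \<and> E w} / measure P {w. E w} * measure P {w. Y w \<in> B \<and> E w}"
proof -
  interpret prob_space P by fact
  have eq: "measure P {w. X w \<in> A \<and> Y w \<in> B \<and> E w} * measure P {w. E w}
       = measure P {w. X w \<in> A \<and> E w} * measure P {w. Y w \<in> B \<and> E w}"
    using ig A B unfolding indep_given_def sp by simp
  have "measure P {w. X w \<in> A \<and> Y w \<in> B \<and> E w} \<le> measure P {w. E w}"
    by (rule finite_measure_mono[OF _ E]) auto
  then show ?thesis using fac_alg[OF eq] by simp
qed

definition uof :: "bool \<Rightarrow> bool \<Rightarrow> comp" where
  "uof d1 d0 = (if d1 \<and> d0 then Always else if d1 \<and> \<not> d0 then Complier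
                else if \<not> d1 \<and> d0 then Defier else Never)"

lemma Uv_uof: "Uv w = uof (D1v w) (D0v w)" by (simp add: Uv_def uof_def)

fun dval :: "comp \<Rightarrow> bool \<Rightarrow> bool" where
  "dval Always z = True" | "dval Never z = False" | "dval Complier z = z" | "dval Defier z = (\<not> z)"

definition Yz :: "bool \<Rightarrow> unit_data \<Rightarrow> real" where "Yz z w = (if z then Y1v w else Y0v w)"

lemma UD: "Uv w = u \<Longrightarrow> Dv w = dval u (Zv w)"
  by (cases u) (auto simp: Uv_def Dv_def split: if_splits)

lemma Yv_Yz: "Zv w = z \<Longrightarrow> Yv w = Yz z w" by (simp add: Yv_def Yz_def)

lemma meas_Yz[measurable]: "Yz z \<in> borel_measurable full_space"
  unfolding Yz_def by measurable

lemma Zind: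
  assumes b: "base_model P" and T: "Measurable.pred (count_space UNIV \<Otimes>\<^sub>M count_space UNIV \<Otimes>\<^sub>M borel \<Otimes>\<^sub>M borel) T"
  shows "measure P {w. Zv w = z \<and> T (D1v w, D0v w, Y1v w, Y0v w)}
       = measure P {w. Zv w = z} * measure P {w. T (D1v w, D0v w, Y1v w, Y0v w)}"
proof -
  interpret prob_space P using bm_prob[OF b] .
  let ?M = "count_space UNIV \<Otimes>\<^sub>M count_space UNIV \<Otimes>\<^sub>M borel \<Otimes>\<^sub>M (borel :: real measure)"
  have ig: "indep_given P Zv (count_space UNIV) (\<lambda>w. (D1v w, D0v w, Y1v w, Y0v w)) ?M (\<lambda>w. True)"
    using b by (simp add: base_model_def)
  have Ts: "{x \<in> space ?M. T x} \<in> sets ?M" using T by (simp add: pred_def)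
  have sM: "space ?M = UNIV" by (simp add: space_pair_measure)
  have zs: "{z} \<in> sets (count_space UNIV)" by simp
  have one: "measure P {w. True} = 1" using prob_space bm_space[OF b] by simp
  have "measure P {w \<in> UNIV. Zv w \<in> {z} \<and> (D1v w, D0v w, Y1v w, Y0v w) \<in> {x \<in> space ?M. T x} \<and> True} * measure P {w \<in> UNIV. True}
     = measure P {w \<in> UNIV. Zv w \<in> {z} \<and> True} * measure P {w \<in> UNIV. (D1v w, D0v w, Y1v w, Y0v w) \<in> {x \<in> space ?M. T x} \<and> True}"
    using ig[unfolded indep_given_def bm_space[OF b]] Ts zs by blast
  then show ?thesis using one bm_space[OF b] by (simp add: sM)
qed

lemma predT[measurable]:
  assumes [measurable]: "B \<in> sets borel"
  shows "Measurable.pred (count_space UNIV \<Otimes>\<^sub>M count_space UNIV \<Otimes>\<^sub>M borel \<Otimes>\<^sub>M borel)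
     (\<lambda>x::bool\<times>bool\<times>real\<times>real. uof (fst x) (fst (snd x)) = u \<and> (if z then fst (snd (snd x)) else snd (snd (snd x))) \<in> B)"
  unfolding uof_def by measurable


lemma ev_UD: "base_model P \<Longrightarrow> {w. (Uv w, Dv w) = (u, d)} \<in> sets P"
proof -
  assume b: "base_model P"
  have "Measurable.pred full_space (\<lambda>w. Uv w = u \<and> Dv w = d)" by measurable
  from ev_sets[OF b this] show ?thesis by simp
qed

lemma rd_fac:
  assumes b: "base_model P" and B[measurable]: "B \<in> sets borel"
  shows "measure P {w. Zv w = z \<and> RDv w \<and> Uv w = u \<and> Yv w \<in> B}
       = measure P {w. Zv w = z} * cprob P RDv (\<lambda>w. Uv w = u \<and> Dv w = dval u z)
         * measure P {w. Uv w = u \<and> Yz z w \<in> B}"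
proof -
  let ?d = "dval u z"
  have ci: "cond_indep P RDv (count_space UNIV) (\<lambda>w. (Zv w, Yv w)) (count_space UNIV \<Otimes>\<^sub>M borel)
        (\<lambda>w. (Uv w, Dv w))" using b by (simp add: base_model_def)
  then have ig: "indep_given P RDv (count_space UNIV) (\<lambda>w. (Zv w, Yv w)) (count_space UNIV \<Otimes>\<^sub>M borel)
        (\<lambda>w. (Uv w, Dv w) = (u, ?d))" unfolding cond_indep_def by blast
  have s1: "{True} \<in> sets (count_space UNIV)" by simp
  have s2: "{z} \<times> B \<in> sets (count_space UNIV \<Otimes>\<^sub>M borel)" by simp
  note h = ig_fac[OF bm_prob[OF b] bm_space[OF b] ig s1 s2 ev_UD[OF b]]
  have e1: "{w. RDv w \<in> {True} \<and> (Zv w, Yv w) \<in> {z} \<times> B \<and> (Uv w, Dv w) = (u, ?d)}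
          = {w. Zv w = z \<and> RDv w \<and> Uv w = u \<and> Yv w \<in> B}" using UD by auto
  have e2: "measure P {w. RDv w \<in> {True} \<and> (Uv w, Dv w) = (u, ?d)} / measure P {w. (Uv w, Dv w) = (u, ?d)}
          = cprob P RDv (\<lambda>w. Uv w = u \<and> Dv w = ?d)"
    by (simp add: cprob_def bm_space[OF b])
  define T where "T = (\<lambda>x::bool\<times>bool\<times>real\<times>real. uof (fst x) (fst (snd x)) = u \<and> (if z then fst (snd (snd x)) else snd (snd (snd x))) \<in> B)"
  have e3: "{w. (Zv w, Yv w) \<in> {z} \<times> B \<and> (Uv w, Dv w) = (u, ?d)}
          = {w. Zv w = z \<and> T (D1v w, D0v w, Y1v w, Y0v w)}"
    using UD by (auto simp: T_def Uv_uof[symmetric] Yv_def)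
  have e4: "{w. T (D1v w, D0v w, Y1v w, Y0v w)} = {w. Uv w = u \<and> Yz z w \<in> B}"
    by (auto simp: T_def Uv_uof[symmetric] Yz_def)
  have "Measurable.pred (count_space UNIV \<Otimes>\<^sub>M count_space UNIV \<Otimes>\<^sub>M borel \<Otimes>\<^sub>M borel) T"
    unfolding T_def by measurable
  note z = Zind[OF b this, of z]
  show ?thesis using h unfolding e1 e2 e3 z e4 by simp
qed


lemma bm_intY:
  assumes b: "base_model P" shows "integrable P Y0v" "integrable P Y1v" "integrable P Yv"
proof -
  show i0: "integrable P Y0v" using b by (simp add: base_model_def)
  show i1: "integrable P Y1v" using b by (simp add: base_model_def)
  have i01: "integrable P (\<lambda>w. \<bar>Y0v w\<bar> + \<bar>Y1v w\<bar>)" using i0 i1 by auto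
  have mY: "Yv \<in> borel_measurable P" by (rule bm_meas[OF b]) measurable
  have ae: "AE w in P. norm (Yv w) \<le> norm (\<bar>Y0v w\<bar> + \<bar>Y1v w\<bar>)"
    by (rule AE_I2) (simp add: Yv_def)
  show "integrable P Yv" by (rule Bochner_Integration.integrable_bound[OF i01 mY ae])
qed

lemma int_ind:
  fixes V :: "_ \<Rightarrow> real"
  shows "S \<in> sets P \<Longrightarrow> integrable P V \<Longrightarrow> integrable P (\<lambda>w. indicator S w * V w)"
  using integrable_mult_indicator[of S P V] by simp

definition JIu :: "unit_data measure \<Rightarrow> (unit_data \<Rightarrow> bool) \<Rightarrow> (unit_data \<Rightarrow> real) \<Rightarrow> bool \<Rightarrow> comp \<Rightarrow> real" where
  "JIu P R V z u = (\<integral>w. indicator {w. Zv w = z \<and> RDv w \<and> Uv w = u \<and> R w} w * V w \<partial>P)"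
definition JI :: "unit_data measure \<Rightarrow> (unit_data \<Rightarrow> bool) \<Rightarrow> (unit_data \<Rightarrow> real) \<Rightarrow> bool \<Rightarrow> bool \<Rightarrow> real" where
  "JI P R V z d = (\<integral>w. indicator {w. Zv w = z \<and> RDv w \<and> Dv w = d \<and> R w} w * V w \<partial>P)"

definition sel :: "comp \<Rightarrow> bool \<Rightarrow> bool \<Rightarrow> real" where "sel u z d = (if dval u z = d then 1 else 0)"

lemma split4:
  assumes b: "base_model P" and R[measurable]: "Measurable.pred full_space R" and V: "integrable P V"
  shows "JI P R V z d = sel Always z d * JIu P R V z Always + sel Complier z d * JIu P R V z Complier
      + sel Defier z d * JIu P R V z Defier + sel Never z d * JIu P R V z Never"
proof -
  let ?f = "\<lambda>u w. indicator {w. Zv w = z \<and> RDv w \<and> Uv w = u \<and> R w} w * V w"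
  have pw: "\<And>w. indicator {w. Zv w = z \<and> RDv w \<and> Dv w = d \<and> R w} w * V w
     = sel Always z d * ?f Always w + sel Complier z d * ?f Complier w + sel Defier z d * ?f Defier w + sel Never z d * ?f Never w"
  proof -
    fix w show "?thesis w"
      using UD[of w "Uv w"] by (cases "Uv w") (auto simp: sel_def indicator_def)
  qed
  have ii: "\<And>u. integrable P (\<lambda>w. sel u z d * ?f u w)"
  proof -
    fix u
    have "Measurable.pred full_space (\<lambda>w. Zv w = z \<and> RDv w \<and> Uv w = u \<and> R w)" by measurable
    from ev_sets[OF b this] have "integrable P (?f u)" by (rule int_ind[OF _ V])
    then show "integrable P (\<lambda>w. sel u z d * ?f u w)" by simp
  qed
  show ?thesis unfolding JI_def JIu_def pw using ii by simp
qed

lemma defier_null: assumes b: "base_model P" shows "measure P {w. Uv w = Defier} = 0"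
proof -
  interpret prob_space P using bm_prob[OF b] .
  have ae: "AE w in P. D0v w \<longrightarrow> D1v w" using b by (simp add: base_model_def)
  have s: "{w. Uv w = Defier} \<in> sets P" by (rule ev_sets[OF b]) measurable
  have "AE w in P. w \<notin> {w. Uv w = Defier}" using ae by eventually_elim (auto simp: Uv_def)
  then have "emeasure P {w. Uv w = Defier} = 0" using AE_iff_measurable[OF s] bm_space[OF b] by auto
  then show ?thesis by (simp add: measure_def)
qed

lemma defier_int: assumes b: "base_model P" shows "JIu P R V z Defier = 0"
proof -
  interpret prob_space P using bm_prob[OF b] .
  have s: "{w. Uv w = Defier} \<in> sets P" by (rule ev_sets[OF b]) measurable
  have "AE w in P. w \<notin> {w. Uv w = Defier}"
    using defier_null[OF b] s bm_space[OF b] by (simp add: AE_iff_measurable emeasure_eq_measure)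
  then have "AE w in P. indicator {w. Zv w = z \<and> RDv w \<and> Uv w = Defier \<and> R w} w * V w = 0"
    by eventually_elim (auto simp: indicator_def)
  then show ?thesis unfolding JIu_def by (rule integral_eq_zero_AE)
qed


lemma cprob_nonneg: "cprob P A B \<ge> 0" by (simp add: cprob_def)

lemma rd_int:
  assumes b: "base_model P"
  shows "JIu P (\<lambda>_. True) Yv z u = measure P {w. Zv w = z} * cprob P RDv (\<lambda>w. Uv w = u \<and> Dv w = dval u z)
         * (\<integral>w. indicator {w. Uv w = u} w * Yz z w \<partial>P)"
proof -
  have A: "{w. Zv w = z \<and> RDv w \<and> Uv w = u} \<in> sets P" by (rule ev_sets[OF b]) measurable
  have G: "{w. Uv w = u} \<in> sets P" by (rule ev_sets[OF b]) measurable
  have V: "Yv \<in> borel_measurable P" by (rule bm_meas[OF b]) measurable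
  have W: "Yz z \<in> borel_measurable P" by (rule bm_meas[OF b]) measurable
  have c: "0 \<le> measure P {w. Zv w = z} * cprob P RDv (\<lambda>w. Uv w = u \<and> Dv w = dval u z)"
    by (intro mult_nonneg_nonneg measure_nonneg cprob_nonneg)
  have "(\<integral>w. indicator {w. Zv w = z \<and> RDv w \<and> Uv w = u} w * Yv w \<partial>P)
     = measure P {w. Zv w = z} * cprob P RDv (\<lambda>w. Uv w = u \<and> Dv w = dval u z) * (\<integral>w. indicator {w. Uv w = u} w * Yz z w \<partial>P)"
  proof (rule int_eq[OF bm_prob[OF b] bm_space[OF b] A G V W c])
    fix B :: "real set" assume B: "B \<in> sets borel"
    have "{w. w \<in> {w. Zv w = z \<and> RDv w \<and> Uv w = u} \<and> Yv w \<in> B} = {w. Zv w = z \<and> RDv w \<and> Uv w = u \<and> Yv w \<in> B}" by auto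
    moreover have "{w. w \<in> {w. Uv w = u} \<and> Yz z w \<in> B} = {w. Uv w = u \<and> Yz z w \<in> B}" by auto
    ultimately show "measure P {w. w \<in> {w. Zv w = z \<and> RDv w \<and> Uv w = u} \<and> Yv w \<in> B}
       = measure P {w. Zv w = z} * cprob P RDv (\<lambda>w. Uv w = u \<and> Dv w = dval u z) * measure P {w. w \<in> {w. Uv w = u} \<and> Yz z w \<in> B}"
      using rd_fac[OF b B, of z u] by simp
  qed
  then show ?thesis by (simp add: JIu_def)
qed

lemma JIu_one:
  assumes b: "base_model P" and R[measurable]: "Measurable.pred full_space R"
  shows "JIu P R (\<lambda>_. 1) z u = measure P {w. Zv w = z \<and> RDv w \<and> Uv w = u \<and> R w}"
  using bm_space[OF b] by (simp add: JIu_def)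

lemma JI_one:
  assumes b: "base_model P" and R[measurable]: "Measurable.pred full_space R"
  shows "JI P R (\<lambda>_. 1) z d = measure P {w. Zv w = z \<and> RDv w \<and> Dv w = d \<and> R w}"
  using bm_space[OF b] by (simp add: JI_def)

lemma rd_mass:
  assumes b: "base_model P" and S: "S \<in> sets borel"
  shows "JIu P (\<lambda>w. Yv w \<in> S) (\<lambda>_. 1) z u = measure P {w. Zv w = z} * cprob P RDv (\<lambda>w. Uv w = u \<and> Dv w = dval u z)
         * measure P {w. Uv w = u \<and> Yz z w \<in> S}"
proof -
  have "Measurable.pred full_space (\<lambda>w. Yv w \<in> S)" using S by measurable
  then show ?thesis using rd_fac[OF b S, of z u] JIu_one[OF b] by simp
qed

lemma rd_mass1:
  assumes b: "base_model P"
  shows "JIu P (\<lambda>_. True) (\<lambda>_. 1) z u = measure P {w. Zv w = z} * cprob P RDv (\<lambda>w. Uv w = u \<and> Dv w = dval u z)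
         * measure P {w. Uv w = u}"
  using rd_mass[OF b, of UNIV z u] by (simp add: JIu_def)


definition pz :: "unit_data measure \<Rightarrow> bool \<Rightarrow> real" where "pz P z = measure P {w. Zv w = z}"
definition alpha :: "unit_data measure \<Rightarrow> comp \<Rightarrow> bool \<Rightarrow> real" where
  "alpha P u d = cprob P RDv (\<lambda>w. Uv w = u \<and> Dv w = d)"
definition Icu :: "unit_data measure \<Rightarrow> comp \<Rightarrow> bool \<Rightarrow> real" where
  "Icu P u z = (\<integral>w. indicator {w. Uv w = u} w * Yz z w \<partial>P)"
definition piu :: "unit_data measure \<Rightarrow> comp \<Rightarrow> real" where "piu P u = measure P {w. Uv w = u}"

definition Fform :: "(bool \<Rightarrow> bool \<Rightarrow> real) \<Rightarrow> (bool \<Rightarrow> bool \<Rightarrow> real) \<Rightarrow> (bool \<Rightarrow> real) \<Rightarrow> real" where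
  "Fform I M p = (I True True / p True - I False True / p False) / (M True True / p True - M False True / p False)
     - (I False False / p False - I True False / p True) / (M False False / p False - M True False / p True)"

lemma rd_int': "base_model P \<Longrightarrow> JIu P (\<lambda>_. True) Yv z u = pz P z * alpha P u (dval u z) * Icu P u z"
  using rd_int unfolding pz_def alpha_def Icu_def by blast
lemma rd_mass1': "base_model P \<Longrightarrow> JIu P (\<lambda>_. True) (\<lambda>_. 1) z u = pz P z * alpha P u (dval u z) * piu P u"
  using rd_mass1 unfolding pz_def alpha_def piu_def by blast

lemma alg_key:
  fixes p1 p0 :: real
  assumes "p1 > 0" "p0 > 0" "kcT > 0" "kcF > 0" "pic > 0"
    "I11 = p1 * (ka * Ia + kcT * IcT)" "I01 = p0 * (ka * Ia)" "M11 = p1 * (ka * pia + kcT * pic)" "M01 = p0 * (ka * pia)"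
    "I00 = p0 * (kn * In + kcF * IcF)" "I10 = p1 * (kn * In)" "M00 = p0 * (kn * pin + kcF * pic)" "M10 = p1 * (kn * pin)"
  shows "(I11 / p1 - I01 / p0) / (M11 / p1 - M01 / p0) - (I00 / p0 - I10 / p1) / (M00 / p0 - M10 / p1) = (IcT - IcF) / pic"
proof -
  have a: "I11 / p1 - I01 / p0 = kcT * IcT" "M11 / p1 - M01 / p0 = kcT * pic"
     "I00 / p0 - I10 / p1 = kcF * IcF" "M00 / p0 - M10 / p1 = kcF * pic"
    using assms by (simp_all add: field_simps)
  show ?thesis unfolding a using assms by (simp add: field_simps)
qed

lemma bm_pz: assumes b: "base_model P" shows "pz P True > 0" "pz P False > 0"
proof -
  interpret prob_space P using bm_prob[OF b] .
  have s: "{w. Zv w} \<in> sets P" by (rule ev_sets[OF b]) measurable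
  have h: "0 < measure P {w. Zv w}" "measure P {w. Zv w} < 1" using b bm_space[OF b] by (simp_all add: base_model_def)
  show "pz P True > 0" using h by (simp add: pz_def)
  have "measure P (space P - {w. Zv w}) = 1 - measure P {w. Zv w}" using prob_compl[OF s] .
  moreover have "space P - {w. Zv w} = {w. Zv w = False}" using bm_space[OF b] by auto
  ultimately show "pz P False > 0" using h by (simp add: pz_def)
qed

lemma bm_alpha: "base_model P \<Longrightarrow> alpha P Complier d > 0"
  by (simp add: base_model_def alpha_def)

lemma cprob_pos_den: "cprob P A B > 0 \<Longrightarrow> measure P {w \<in> space P. B w} > 0"
  unfolding cprob_def by (metis divide_eq_0_iff less_eq_real_def measure_nonneg not_less)

lemma bm_pic: assumes b: "base_model P" shows "piu P Complier > 0"
proof -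
  interpret prob_space P using bm_prob[OF b] .
  have "measure P {w. Uv w = Complier \<and> Dv w = True} > 0"
    using cprob_pos_den[OF bm_alpha[OF b, where d=True, unfolded alpha_def]] bm_space[OF b] by simp
  moreover have "measure P {w. Uv w = Complier \<and> Dv w = True} \<le> measure P {w. Uv w = Complier}"
  proof (rule finite_measure_mono)
    show "{w. Uv w = Complier} \<in> sets P" by (rule ev_sets[OF b]) measurable
  qed auto
  ultimately show ?thesis by (simp add: piu_def)
qed


lemma cace_eq:
  assumes b: "base_model P"
  shows "cace P = (Icu P Complier True - Icu P Complier False) / piu P Complier"
proof -
  let ?S = "{w. Uv w = Complier}"
  have S: "?S \<in> sets P" by (rule ev_sets[OF b]) measurable
  have i1: "integrable P (\<lambda>w. indicator ?S w * Yz True w)"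
    using int_ind[OF S bm_intY(2)[OF b]] by (simp add: Yz_def)
  have i0: "integrable P (\<lambda>w. indicator ?S w * Yz False w)"
    using int_ind[OF S bm_intY(1)[OF b]] by (simp add: Yz_def)
  have e: "(\<lambda>w. indicator ?S w * (Y1v w - Y0v w)) = (\<lambda>w. indicator ?S w * Yz True w - indicator ?S w * Yz False w)"
    by (auto simp: Yz_def right_diff_distrib)
  show ?thesis unfolding cace_def e Icu_def piu_def using i0 i1 bm_space[OF b] by simp
qed

lemma Ian_eq:
  assumes b: "base_model P" and u: "u \<in> {Always, Never}"
  shows "Icu P u False = Icu P u True"
proof -
  have ae: "AE w in P. Uv w \<in> {Always, Never} \<longrightarrow> Y1v w = Y0v w" using b by (simp add: base_model_def)
  have m1: "(\<lambda>w. indicator {w. Uv w = u} w * Yz False w) \<in> borel_measurable P" by (rule bm_meas[OF b]) measurable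
  have m2: "(\<lambda>w. indicator {w. Uv w = u} w * Yz True w) \<in> borel_measurable P" by (rule bm_meas[OF b]) measurable
  have "AE w in P. indicator {w. Uv w = u} w * Yz False w = indicator {w. Uv w = u} w * Yz True w"
    using ae by eventually_elim (use u in \<open>auto simp: Yz_def indicator_def\<close>)
  then show ?thesis unfolding Icu_def by (rule integral_cong_AE[OF m1 m2])
qed

lemma key:
  assumes b: "base_model P" and R[measurable]: "Measurable.pred full_space R"
    and hI: "\<And>z u. JIu P R Yv z u = K u (dval u z) * JIu P (\<lambda>_. True) Yv z u"
    and hM: "\<And>z u. JIu P R (\<lambda>_. 1) z u = K u (dval u z) * JIu P (\<lambda>_. True) (\<lambda>_. 1) z u"
    and Kc: "\<And>d. K Complier d > 0"
  shows "cace P = Fform (JI P R Yv) (JI P R (\<lambda>_. 1)) (pz P)"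
proof -
  interpret prob_space P using bm_prob[OF b] .
  have iY: "integrable P Yv" by (rule bm_intY(3)[OF b])
  have i1: "integrable P (\<lambda>_. 1::real)" by simp
  have I11: "JI P R Yv True True = K Always True * (pz P True * alpha P Always True * Icu P Always True)
      + K Complier True * (pz P True * alpha P Complier True * Icu P Complier True)"
    using split4[OF b R iY, of True True] hI[of True Always] hI[of True Complier]
      rd_int'[OF b, of True Always] rd_int'[OF b, of True Complier] by (simp add: sel_def)
  have I01: "JI P R Yv False True = K Always True * (pz P False * alpha P Always True * Icu P Always True)"
    using split4[OF b R iY, of False True] hI[of False Always] defier_int[OF b]
      rd_int'[OF b, of False Always] Ian_eq[OF b, of Always] by (simp add: sel_def)
  have I00: "JI P R Yv False False = K Complier False * (pz P False * alpha P Complier False * Icu P Complier False)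
      + K Never False * (pz P False * alpha P Never False * Icu P Never False)"
    using split4[OF b R iY, of False False] hI[of False Never] hI[of False Complier]
      rd_int'[OF b, of False Never] rd_int'[OF b, of False Complier] by (simp add: sel_def)
  have I10: "JI P R Yv True False = K Never False * (pz P True * alpha P Never False * Icu P Never False)"
    using split4[OF b R iY, of True False] hI[of True Never] defier_int[OF b]
      rd_int'[OF b, of True Never] Ian_eq[OF b, of Never] by (simp add: sel_def)
  have M11: "JI P R (\<lambda>_. 1) True True = K Always True * (pz P True * alpha P Always True * piu P Always)
      + K Complier True * (pz P True * alpha P Complier True * piu P Complier)"
    using split4[OF b R i1, of True True] hM[of True Always] hM[of True Complier]
      rd_mass1'[OF b, of True Always] rd_mass1'[OF b, of True Complier] by (simp add: sel_def)
  have M01: "JI P R (\<lambda>_. 1) False True = K Always True * (pz P False * alpha P Always True * piu P Always)"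
    using split4[OF b R i1, of False True] hM[of False Always] defier_int[OF b]
      rd_mass1'[OF b, of False Always] by (simp add: sel_def)
  have M00: "JI P R (\<lambda>_. 1) False False = K Complier False * (pz P False * alpha P Complier False * piu P Complier)
      + K Never False * (pz P False * alpha P Never False * piu P Never)"
    using split4[OF b R i1, of False False] hM[of False Never] hM[of False Complier]
      rd_mass1'[OF b, of False Never] rd_mass1'[OF b, of False Complier] by (simp add: sel_def)
  have M10: "JI P R (\<lambda>_. 1) True False = K Never False * (pz P True * alpha P Never False * piu P Never)"
    using split4[OF b R i1, of True False] hM[of True Never] defier_int[OF b]
      rd_mass1'[OF b, of True Never] by (simp add: sel_def)
  have kc1: "K Complier True * alpha P Complier True > 0" using Kc bm_alpha[OF b] by simp
  have kc0: "K Complier False * alpha P Complier False > 0" using Kc bm_alpha[OF b] by simp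
  have "Fform (JI P R Yv) (JI P R (\<lambda>_. 1)) (pz P) = (Icu P Complier True - Icu P Complier False) / piu P Complier"
    unfolding Fform_def
  proof (rule alg_key[where ka = "K Always True * alpha P Always True" and Ia = "Icu P Always True"
        and kcT = "K Complier True * alpha P Complier True" and kcF = "K Complier False * alpha P Complier False"
        and kn = "K Never False * alpha P Never False" and In = "Icu P Never False"
        and pia = "piu P Always" and pin = "piu P Never"])
    show "pz P True > 0" "pz P False > 0" using bm_pz[OF b] by auto
    show "K Complier True * alpha P Complier True > 0" "K Complier False * alpha P Complier False > 0"
      using kc1 kc0 by auto
    show "piu P Complier > 0" by (rule bm_pic[OF b])
  qed (simp_all add: I11 I01 I00 I10 M11 M01 M00 M10 algebra_simps)
  then show ?thesis using cace_eq[OF b] by simp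
qed


lemma obs_meas_full[measurable]: "obs \<in> measurable full_space obs_space"
  unfolding obs_def obs_space_def by measurable

lemma space_obs: "space obs_space = UNIV" by (simp add: obs_space_def space_pair_measure)

lemma obs_int:
  assumes b: "base_model P" and b': "base_model P'" and L: "obs_law P = obs_law P'"
    and g: "g \<in> borel_measurable obs_space"
  shows "(\<integral>w. g (obs w) \<partial>P) = (\<integral>w. (g (obs w) :: real) \<partial>P')"
proof -
  have "(\<integral>w. g (obs w) \<partial>P) = integral\<^sup>L (obs_law P) g"
    unfolding obs_law_def by (rule integral_distr[symmetric, OF bm_meas[OF b obs_meas_full] g])
  also have "\<dots> = integral\<^sup>L (obs_law P') g" using L by simp
  also have "\<dots> = (\<integral>w. g (obs w) \<partial>P')"
    unfolding obs_law_def by (rule integral_distr[OF bm_meas[OF b' obs_meas_full] g])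
  finally show ?thesis .
qed

lemma obs_pred:
  assumes b: "base_model P" and b': "base_model P'" and L: "obs_law P = obs_law P'"
    and g: "Measurable.pred obs_space \<phi>"
  shows "measure P {w. \<phi> (obs w)} = measure P' {w. \<phi> (obs w)}"
proof -
  have S: "{x \<in> space obs_space. \<phi> x} \<in> sets obs_space" using g by (simp add: pred_def)
  have "measure P {w. \<phi> (obs w)} = measure (obs_law P) {x \<in> space obs_space. \<phi> x}"
    unfolding obs_law_def using measure_distr[OF bm_meas[OF b obs_meas_full] S] bm_space[OF b] space_obs
    by (simp add: vimage_def)
  also have "\<dots> = measure (obs_law P') {x \<in> space obs_space. \<phi> x}" using L by simp
  also have "\<dots> = measure P' {w. \<phi> (obs w)}"
    unfolding obs_law_def using measure_distr[OF bm_meas[OF b' obs_meas_full] S] bm_space[OF b'] space_obs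
    by (simp add: vimage_def)
  finally show ?thesis .
qed

lemma obs_JI_RY:
  assumes b: "base_model P" and b': "base_model P'" and L: "obs_law P = obs_law P'"
  shows "JI P RYv Yv z d = JI P' RYv Yv z d"
proof -
  define g where "g = (\<lambda>x::bool\<times>bool\<times>bool\<times>bool\<times>real. if fst x = z \<and> fst (snd x) \<and> fst (snd (snd x)) = d \<and> fst (snd (snd (snd x))) then snd (snd (snd (snd x))) else 0)"
  have gm: "g \<in> borel_measurable obs_space" unfolding g_def obs_space_def by measurable
  have pw: "\<And>w. indicator {w. Zv w = z \<and> RDv w \<and> Dv w = d \<and> RYv w} w * Yv w = g (obs w)"
    by (auto simp: g_def obs_def indicator_def)
  show ?thesis unfolding JI_def pw using obs_int[OF b b' L gm] .
qed

lemma obs_M1: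
  assumes b: "base_model P" and b': "base_model P'" and L: "obs_law P = obs_law P'"
  shows "JI P (\<lambda>_. True) (\<lambda>_. 1) z d = JI P' (\<lambda>_. True) (\<lambda>_. 1) z d"
proof -
  define \<phi> where "\<phi> = (\<lambda>x::bool\<times>bool\<times>bool\<times>bool\<times>real. fst x = z \<and> fst (snd x) \<and> fst (snd (snd x)) = d)"
  have m: "Measurable.pred obs_space \<phi>" unfolding \<phi>_def obs_space_def by measurable
  have e: "{w. \<phi> (obs w)} = {w. Zv w = z \<and> RDv w \<and> Dv w = d \<and> True}" by (auto simp: \<phi>_def obs_def)
  have r: "Measurable.pred full_space (\<lambda>_. True)" by measurable
  show ?thesis using obs_pred[OF b b' L m] unfolding e JI_one[OF b r] JI_one[OF b' r] .
qed

lemma obs_MRY: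
  assumes b: "base_model P" and b': "base_model P'" and L: "obs_law P = obs_law P'"
  shows "JI P RYv (\<lambda>_. 1) z d = JI P' RYv (\<lambda>_. 1) z d"
proof -
  define \<phi> where "\<phi> = (\<lambda>x::bool\<times>bool\<times>bool\<times>bool\<times>real. fst x = z \<and> fst (snd x) \<and> fst (snd (snd x)) = d \<and> fst (snd (snd (snd x))))"
  have m: "Measurable.pred obs_space \<phi>" unfolding \<phi>_def obs_space_def by measurable
  have e: "{w. \<phi> (obs w)} = {w. Zv w = z \<and> RDv w \<and> Dv w = d \<and> RYv w}" by (auto simp: \<phi>_def obs_def)
  have r: "Measurable.pred full_space RYv" by measurable
  show ?thesis using obs_pred[OF b b' L m] unfolding e JI_one[OF b r] JI_one[OF b' r] .
qed

lemma obs_MRYy: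
  assumes b: "base_model P" and b': "base_model P'" and L: "obs_law P = obs_law P'"
  shows "JI P (\<lambda>w. RYv w \<and> Yv w = y) (\<lambda>_. 1) z d = JI P' (\<lambda>w. RYv w \<and> Yv w = y) (\<lambda>_. 1) z d"
proof -
  define \<phi> where "\<phi> = (\<lambda>x::bool\<times>bool\<times>bool\<times>bool\<times>real. fst x = z \<and> fst (snd x) \<and> fst (snd (snd x)) = d \<and> fst (snd (snd (snd x))) \<and> snd (snd (snd (snd x))) = y)"
  have m: "Measurable.pred obs_space \<phi>" unfolding \<phi>_def obs_space_def by measurable
  have e: "{w. \<phi> (obs w)} = {w. Zv w = z \<and> RDv w \<and> Dv w = d \<and> RYv w \<and> Yv w = y}" by (auto simp: \<phi>_def obs_def)
  have r: "Measurable.pred full_space (\<lambda>w. RYv w \<and> Yv w = y)" by measurable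
  show ?thesis using obs_pred[OF b b' L m] unfolding e JI_one[OF b r] JI_one[OF b' r] by simp
qed

lemma obs_pz:
  assumes b: "base_model P" and b': "base_model P'" and L: "obs_law P = obs_law P'"
  shows "pz P z = pz P' z"
proof -
  define \<phi> where "\<phi> = (\<lambda>x::bool\<times>bool\<times>bool\<times>bool\<times>real. fst x = z)"
  have m: "Measurable.pred obs_space \<phi>" unfolding \<phi>_def obs_space_def by measurable
  have e: "{w. \<phi> (obs w)} = {w. Zv w = z}" by (auto simp: \<phi>_def obs_def)
  show ?thesis using obs_pred[OF b b' L m] unfolding e pz_def by simp
qed

lemma ry_factor_gen:
  assumes b: "base_model P" and ig: "indep_given P RYv (count_space UNIV) Yf MY E"
    and B: "B \<in> sets MY" and E: "Measurable.pred full_space E"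
  shows "measure P {w. RYv w \<and> Yf w \<in> B \<and> E w} = cprob P RYv E * measure P {w. Yf w \<in> B \<and> E w}"
proof -
  have s1: "{True} \<in> sets (count_space UNIV)" by simp
  note h = ig_fac[OF bm_prob[OF b] bm_space[OF b] ig s1 B ev_sets[OF b E]]
  then show ?thesis by (simp add: cprob_def bm_space[OF b])
qed


lemma case1:
  assumes b: "base_model P"
    and ci: "cond_indep P RYv (count_space UNIV) (\<lambda>w. (Uv w, Yv w)) (count_space UNIV \<Otimes>\<^sub>M borel)
        (\<lambda>w. (Zv w, Dv w, RDv w))"
    and pos: "\<forall>z d. cprob P RYv (\<lambda>w. Zv w = z \<and> Dv w = d \<and> RDv w) > 0"
  shows "cace P = Fform (\<lambda>z d. JI P RYv Yv z d * JI P (\<lambda>_. True) (\<lambda>_. 1) z d / JI P RYv (\<lambda>_. 1) z d)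
           (JI P (\<lambda>_. True) (\<lambda>_. 1)) (pz P)"
proof -
  have k: "cace P = Fform (JI P (\<lambda>_. True) Yv) (JI P (\<lambda>_. True) (\<lambda>_. 1)) (pz P)"
    by (rule key[where K = "\<lambda>_ _. 1"]) (simp_all add: b)
  have eq: "JI P (\<lambda>_. True) Yv z d = JI P RYv Yv z d * JI P (\<lambda>_. True) (\<lambda>_. 1) z d / JI P RYv (\<lambda>_. 1) z d" for z d
  proof -
    define \<beta> where "\<beta> = cprob P RYv (\<lambda>w. Zv w = z \<and> Dv w = d \<and> RDv w)"
    have \<beta>: "\<beta> > 0" using pos by (simp add: \<beta>_def)
    have E[measurable]: "Measurable.pred full_space (\<lambda>w. Zv w = z \<and> Dv w = d \<and> RDv w)" by measurable
    have fe: "(\<lambda>w. (Zv w, Dv w, RDv w) = (z, d, True)) = (\<lambda>w. Zv w = z \<and> Dv w = d \<and> RDv w)" by auto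
    have ig: "indep_given P RYv (count_space UNIV) (\<lambda>w. (Uv w, Yv w)) (count_space UNIV \<Otimes>\<^sub>M borel)
        (\<lambda>w. Zv w = z \<and> Dv w = d \<and> RDv w)"
    proof -
      have "indep_given P RYv (count_space UNIV) (\<lambda>w. (Uv w, Yv w)) (count_space UNIV \<Otimes>\<^sub>M borel)
        (\<lambda>w. (Zv w, Dv w, RDv w) = (z, d, True))" using ci unfolding cond_indep_def by blast
      then show ?thesis by (simp only: fe)
    qed
    have mS: "measure P {w. Zv w = z \<and> RDv w \<and> Dv w = d \<and> RYv w \<and> Yv w \<in> S}
        = \<beta> * measure P {w. Zv w = z \<and> RDv w \<and> Dv w = d \<and> Yv w \<in> S}" if S: "S \<in> sets borel" for S
    proof -
      have S2: "UNIV \<times> S \<in> sets (count_space UNIV \<Otimes>\<^sub>M borel)" using S by simp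
      have e1: "{w. RYv w \<and> (Uv w, Yv w) \<in> UNIV \<times> S \<and> Zv w = z \<and> Dv w = d \<and> RDv w}
         = {w. Zv w = z \<and> RDv w \<and> Dv w = d \<and> RYv w \<and> Yv w \<in> S}" by auto
      have e2: "{w. (Uv w, Yv w) \<in> UNIV \<times> S \<and> Zv w = z \<and> Dv w = d \<and> RDv w}
         = {w. Zv w = z \<and> RDv w \<and> Dv w = d \<and> Yv w \<in> S}" by auto
      show ?thesis using ry_factor_gen[OF b ig S2 E] unfolding e1 e2 \<beta>_def .
    qed
    have A: "{w. Zv w = z \<and> RDv w \<and> Dv w = d \<and> RYv w} \<in> sets P" by (rule ev_sets[OF b]) measurable
    have G: "{w. Zv w = z \<and> RDv w \<and> Dv w = d} \<in> sets P" by (rule ev_sets[OF b]) measurable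
    have V: "Yv \<in> borel_measurable P" by (rule bm_meas[OF b]) measurable
    have iI0: "(\<integral>w. indicator {w. Zv w = z \<and> RDv w \<and> Dv w = d \<and> RYv w} w * Yv w \<partial>P)
      = \<beta> * (\<integral>w. indicator {w. Zv w = z \<and> RDv w \<and> Dv w = d} w * Yv w \<partial>P)"
    proof (rule int_eq[OF bm_prob[OF b] bm_space[OF b] A G V V])
      show "0 \<le> \<beta>" using \<beta> by simp
      fix S :: "real set" assume S: "S \<in> sets borel"
      have e1: "{w. w \<in> {w. Zv w = z \<and> RDv w \<and> Dv w = d \<and> RYv w} \<and> Yv w \<in> S} = {w. Zv w = z \<and> RDv w \<and> Dv w = d \<and> RYv w \<and> Yv w \<in> S}" by auto
      have e2: "{w. w \<in> {w. Zv w = z \<and> RDv w \<and> Dv w = d} \<and> Yv w \<in> S} = {w. Zv w = z \<and> RDv w \<and> Dv w = d \<and> Yv w \<in> S}" by auto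
      show "measure P {w. w \<in> {w. Zv w = z \<and> RDv w \<and> Dv w = d \<and> RYv w} \<and> Yv w \<in> S}
          = \<beta> * measure P {w. w \<in> {w. Zv w = z \<and> RDv w \<and> Dv w = d} \<and> Yv w \<in> S}"
        unfolding e1 e2 by (rule mS[OF S])
    qed
    have iI: "JI P RYv Yv z d = \<beta> * JI P (\<lambda>_. True) Yv z d"
      using iI0 by (simp add: JI_def)
    have rT: "Measurable.pred full_space (\<lambda>_. True)" by measurable
    have rY: "Measurable.pred full_space RYv" by measurable
    have iM: "JI P RYv (\<lambda>_. 1) z d = \<beta> * JI P (\<lambda>_. True) (\<lambda>_. 1) z d"
      using mS[of UNIV] unfolding JI_one[OF b rT] JI_one[OF b rY] by simp
    have "measure P {w \<in> space P. Zv w = z \<and> Dv w = d \<and> RDv w} > 0"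
      using cprob_pos_den \<beta> unfolding \<beta>_def by blast
    then have pM: "JI P (\<lambda>_. True) (\<lambda>_. 1) z d > 0"
      unfolding JI_one[OF b rT] using bm_space[OF b] by (simp add: conj_commute conj_left_commute)
    show ?thesis using iI iM \<beta> pM by (simp add: field_simps)
  qed
  have "JI P (\<lambda>_. True) Yv = (\<lambda>z d. JI P RYv Yv z d * JI P (\<lambda>_. True) (\<lambda>_. 1) z d / JI P RYv (\<lambda>_. 1) z d)"
    using eq by (intro ext) simp
  then show ?thesis using k by simp
qed


lemma case2:
  assumes b: "base_model P"
    and ci: "cond_indep P RYv (count_space UNIV) (\<lambda>w. (Zv w, Yv w)) (count_space UNIV \<Otimes>\<^sub>M borel)
        (\<lambda>w. (Uv w, Dv w, RDv w))"
    and pos: "\<forall>d. cprob P RYv (\<lambda>w. Uv w = Complier \<and> Dv w = d \<and> RDv w) > 0"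
  shows "cace P = Fform (JI P RYv Yv) (JI P RYv (\<lambda>_. 1)) (pz P)"
proof (rule key[where K = "\<lambda>u d. cprob P RYv (\<lambda>w. Uv w = u \<and> Dv w = d \<and> RDv w)"])
  show "base_model P" by fact
  show "Measurable.pred full_space RYv" by measurable
  show "\<And>d. cprob P RYv (\<lambda>w. Uv w = Complier \<and> Dv w = d \<and> RDv w) > 0" using pos by simp
  fix z u
  define \<beta> where "\<beta> = cprob P RYv (\<lambda>w. Uv w = u \<and> Dv w = dval u z \<and> RDv w)"
  have \<beta>: "\<beta> \<ge> 0" by (simp add: \<beta>_def cprob_nonneg)
  have E[measurable]: "Measurable.pred full_space (\<lambda>w. Uv w = u \<and> Dv w = dval u z \<and> RDv w)" by measurable
  have fe: "(\<lambda>w. (Uv w, Dv w, RDv w) = (u, dval u z, True)) = (\<lambda>w. Uv w = u \<and> Dv w = dval u z \<and> RDv w)" by auto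
  have ig: "indep_given P RYv (count_space UNIV) (\<lambda>w. (Zv w, Yv w)) (count_space UNIV \<Otimes>\<^sub>M borel)
      (\<lambda>w. Uv w = u \<and> Dv w = dval u z \<and> RDv w)"
  proof -
    have "indep_given P RYv (count_space UNIV) (\<lambda>w. (Zv w, Yv w)) (count_space UNIV \<Otimes>\<^sub>M borel)
      (\<lambda>w. (Uv w, Dv w, RDv w) = (u, dval u z, True))" using ci unfolding cond_indep_def by blast
    then show ?thesis by (simp only: fe)
  qed
  have mS: "measure P {w. Zv w = z \<and> RDv w \<and> Uv w = u \<and> RYv w \<and> Yv w \<in> S}
      = \<beta> * measure P {w. Zv w = z \<and> RDv w \<and> Uv w = u \<and> Yv w \<in> S}" if S: "S \<in> sets borel" for S
  proof -
    have S2: "{z} \<times> S \<in> sets (count_space UNIV \<Otimes>\<^sub>M borel)" using S by simp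
    have e1: "{w. RYv w \<and> (Zv w, Yv w) \<in> {z} \<times> S \<and> Uv w = u \<and> Dv w = dval u z \<and> RDv w}
       = {w. Zv w = z \<and> RDv w \<and> Uv w = u \<and> RYv w \<and> Yv w \<in> S}" using UD by auto
    have e2: "{w. (Zv w, Yv w) \<in> {z} \<times> S \<and> Uv w = u \<and> Dv w = dval u z \<and> RDv w}
       = {w. Zv w = z \<and> RDv w \<and> Uv w = u \<and> Yv w \<in> S}" using UD by auto
    show ?thesis using ry_factor_gen[OF b ig S2 E] unfolding e1 e2 \<beta>_def .
  qed
  have A: "{w. Zv w = z \<and> RDv w \<and> Uv w = u \<and> RYv w} \<in> sets P" by (rule ev_sets[OF b]) measurable
  have G: "{w. Zv w = z \<and> RDv w \<and> Uv w = u} \<in> sets P" by (rule ev_sets[OF b]) measurable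
  have V: "Yv \<in> borel_measurable P" by (rule bm_meas[OF b]) measurable
  have iI0: "(\<integral>w. indicator {w. Zv w = z \<and> RDv w \<and> Uv w = u \<and> RYv w} w * Yv w \<partial>P)
    = \<beta> * (\<integral>w. indicator {w. Zv w = z \<and> RDv w \<and> Uv w = u} w * Yv w \<partial>P)"
  proof (rule int_eq[OF bm_prob[OF b] bm_space[OF b] A G V V \<beta>])
    fix S :: "real set" assume S: "S \<in> sets borel"
    have e1: "{w. w \<in> {w. Zv w = z \<and> RDv w \<and> Uv w = u \<and> RYv w} \<and> Yv w \<in> S} = {w. Zv w = z \<and> RDv w \<and> Uv w = u \<and> RYv w \<and> Yv w \<in> S}" by auto
    have e2: "{w. w \<in> {w. Zv w = z \<and> RDv w \<and> Uv w = u} \<and> Yv w \<in> S} = {w. Zv w = z \<and> RDv w \<and> Uv w = u \<and> Yv w \<in> S}" by auto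
    show "measure P {w. w \<in> {w. Zv w = z \<and> RDv w \<and> Uv w = u \<and> RYv w} \<and> Yv w \<in> S}
        = \<beta> * measure P {w. w \<in> {w. Zv w = z \<and> RDv w \<and> Uv w = u} \<and> Yv w \<in> S}"
      unfolding e1 e2 by (rule mS[OF S])
  qed
  then show "JIu P RYv Yv z u = cprob P RYv (\<lambda>w. Uv w = u \<and> Dv w = dval u z \<and> RDv w) * JIu P (\<lambda>_. True) Yv z u"
    by (simp add: JIu_def \<beta>_def)
  have rT: "Measurable.pred full_space (\<lambda>_. True)" by measurable
  have rY: "Measurable.pred full_space RYv" by measurable
  show "JIu P RYv (\<lambda>_. 1) z u = cprob P RYv (\<lambda>w. Uv w = u \<and> Dv w = dval u z \<and> RDv w) * JIu P (\<lambda>_. True) (\<lambda>_. 1) z u"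
    using mS[of UNIV] unfolding JIu_one[OF b rT] JIu_one[OF b rY] \<beta>_def by simp
qed


lemma ind_int: assumes b: "base_model P" and p: "Measurable.pred full_space \<Phi>"
  shows "integrable P (indicator {w. \<Phi> w} :: _ \<Rightarrow> real)"
proof -
  interpret prob_space P using bm_prob[OF b] .
  show ?thesis using ev_sets[OF b p] by (simp add: less_top[symmetric])
qed

lemma ind_meas: assumes b: "base_model P" and p: "Measurable.pred full_space \<Phi>"
  shows "(\<integral>w. indicator {w. \<Phi> w} w \<partial>P) = measure P {w. \<Phi> w}"
  using bm_space[OF b] by simp

lemma bin_AE: "binary_Y P \<Longrightarrow> AE w in P. Yv w = 0 \<or> Yv w = 1"
  unfolding binary_Y_def by (rule AE_mp) auto

lemma bin_int:
  assumes b: "base_model P" and bin: "binary_Y P" and p[measurable]: "Measurable.pred full_space \<Phi>"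
  shows "(\<integral>w. indicator {w. \<Phi> w} w * Yv w \<partial>P) = measure P {w. \<Phi> w \<and> Yv w = 1}"
proof -
  have m1: "(\<lambda>w. indicator {w. \<Phi> w} w * Yv w) \<in> borel_measurable P" by (rule bm_meas[OF b]) measurable
  have m2: "(indicator {w. \<Phi> w \<and> Yv w = 1} :: _ \<Rightarrow> real) \<in> borel_measurable P" by (rule bm_meas[OF b]) measurable
  have "AE w in P. indicator {w. \<Phi> w} w * Yv w = (indicator {w. \<Phi> w \<and> Yv w = 1} w :: real)"
    using bin_AE[OF bin] by eventually_elim (auto simp: indicator_def)
  then have "(\<integral>w. indicator {w. \<Phi> w} w * Yv w \<partial>P) = (\<integral>w. indicator {w. \<Phi> w \<and> Yv w = 1} w \<partial>P)"
    by (rule integral_cong_AE[OF m1 m2])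
  also have "\<dots> = measure P {w. \<Phi> w \<and> Yv w = 1}" by (rule ind_meas[OF b]) measurable
  finally show ?thesis .
qed

lemma gen4:
  assumes b: "base_model P" and bin: "binary_Y P" and X[measurable]: "Measurable.pred full_space Xf"
    and E[measurable]: "Measurable.pred full_space E" and A[measurable]: "A \<in> sets borel"
  shows "measure P {w. Yv w \<in> A \<and> Xf w \<in> B \<and> E w}
    = of_bool (0 \<in> A \<and> True \<in> B) * measure P {w. Xf w = True \<and> E w \<and> Yv w = 0}
    + of_bool (1 \<in> A \<and> True \<in> B) * measure P {w. Xf w = True \<and> E w \<and> Yv w = 1}
    + of_bool (0 \<in> A \<and> False \<in> B) * measure P {w. Xf w = False \<and> E w \<and> Yv w = 0}
    + of_bool (1 \<in> A \<and> False \<in> B) * measure P {w. Xf w = False \<and> E w \<and> Yv w = 1}"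
proof -
  have B[measurable]: "B \<in> sets (count_space UNIV)" by simp
  let ?S = "\<lambda>x y. indicator {w. Xf w = x \<and> E w \<and> Yv w = y} :: _ \<Rightarrow> real"
  have m1: "(indicator {w. Yv w \<in> A \<and> Xf w \<in> B \<and> E w} :: _ \<Rightarrow> real) \<in> borel_measurable P" by (rule bm_meas[OF b]) measurable
  have m2: "(\<lambda>w. of_bool (0 \<in> A \<and> True \<in> B) * ?S True 0 w + of_bool (1 \<in> A \<and> True \<in> B) * ?S True 1 w
      + of_bool (0 \<in> A \<and> False \<in> B) * ?S False 0 w + of_bool (1 \<in> A \<and> False \<in> B) * ?S False 1 w) \<in> borel_measurable P"
    by (rule bm_meas[OF b]) measurable
  have "AE w in P. (indicator {w. Yv w \<in> A \<and> Xf w \<in> B \<and> E w} w :: real)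
     = of_bool (0 \<in> A \<and> True \<in> B) * ?S True 0 w + of_bool (1 \<in> A \<and> True \<in> B) * ?S True 1 w
      + of_bool (0 \<in> A \<and> False \<in> B) * ?S False 0 w + of_bool (1 \<in> A \<and> False \<in> B) * ?S False 1 w"
    using bin_AE[OF bin] by eventually_elim (auto simp: indicator_def)
  then have "(\<integral>w. indicator {w. Yv w \<in> A \<and> Xf w \<in> B \<and> E w} w \<partial>P) = (\<integral>w. of_bool (0 \<in> A \<and> True \<in> B) * ?S True 0 w + of_bool (1 \<in> A \<and> True \<in> B) * ?S True 1 w
      + of_bool (0 \<in> A \<and> False \<in> B) * ?S False 0 w + of_bool (1 \<in> A \<and> False \<in> B) * ?S False 1 w \<partial>P)"
    by (rule integral_cong_AE[OF m1 m2])
  moreover have ii: "\<And>x y. integrable P (?S x y)" by (rule ind_int[OF b]) measurable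
  ultimately show ?thesis using bm_space[OF b] ii[of True 0] ii[of True 1] ii[of False 0] ii[of False 1] by simp
qed

lemma det_indep:
  assumes b: "base_model P" and bin: "binary_Y P" and X[measurable]: "Measurable.pred full_space Xf"
    and E[measurable]: "Measurable.pred full_space E"
    and det: "measure P {w. Xf w = False \<and> E w \<and> Yv w = 0} * measure P {w. Xf w = True \<and> E w \<and> Yv w = 1}
       - measure P {w. Xf w = False \<and> E w \<and> Yv w = 1} * measure P {w. Xf w = True \<and> E w \<and> Yv w = 0} = 0"
  shows "indep_given P Yv borel Xf (count_space UNIV) E"
  unfolding indep_given_def
proof (intro ballI)
  fix A :: "real set" and B :: "bool set" assume A: "A \<in> sets borel" and "B \<in> sets (count_space UNIV)"
  define t0 where "t0 = measure P {w. Xf w = True \<and> E w \<and> Yv w = 0}"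
  define t1 where "t1 = measure P {w. Xf w = True \<and> E w \<and> Yv w = 1}"
  define f0 where "f0 = measure P {w. Xf w = False \<and> E w \<and> Yv w = 0}"
  define f1 where "f1 = measure P {w. Xf w = False \<and> E w \<and> Yv w = 1}"
  define a where "a = (of_bool (0 \<in> A) :: real)"
  define c where "c = (of_bool (1 \<in> A) :: real)"
  define e where "e = (of_bool (True \<in> B) :: real)"
  define f where "f = (of_bool (False \<in> B) :: real)"
  have ob: "\<And>p q. (of_bool (p \<and> q) :: real) = of_bool p * of_bool q" by simp
  have g1: "measure P {w. Yv w \<in> A \<and> Xf w \<in> B \<and> E w} = a * e * t0 + c * e * t1 + a * f * f0 + c * f * f1"
    using gen4[OF b bin X E A, of B] unfolding ob a_def c_def e_def f_def t0_def t1_def f0_def f1_def by simp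
  have g2: "measure P {w. Yv w \<in> A \<and> E w} = a * t0 + c * t1 + a * f0 + c * f1"
    using gen4[OF b bin X E A, of UNIV] unfolding ob a_def c_def e_def f_def t0_def t1_def f0_def f1_def by simp
  have g3: "measure P {w. Xf w \<in> B \<and> E w} = e * t0 + e * t1 + f * f0 + f * f1"
    using gen4[OF b bin X E, of UNIV B] unfolding ob a_def c_def e_def f_def t0_def t1_def f0_def f1_def by simp
  have g4: "measure P {w. E w} = t0 + t1 + f0 + f1"
    using gen4[OF b bin X E, of UNIV UNIV] unfolding ob a_def c_def e_def f_def t0_def t1_def f0_def f1_def by simp
  have d: "f0 * t1 - f1 * t0 = 0" using det unfolding t0_def t1_def f0_def f1_def .
  have "(a * e * t0 + c * e * t1 + a * f * f0 + c * f * f1) * (t0 + t1 + f0 + f1)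
      - (a * t0 + c * t1 + a * f0 + c * f1) * (e * t0 + e * t1 + f * f0 + f * f1) = (e - f) * (a - c) * (t0 * f1 - t1 * f0)"
    by (simp add: algebra_simps)
  also have "\<dots> = 0" using d by (simp add: algebra_simps)
  finally show "measure P {w \<in> space P. Yv w \<in> A \<and> Xf w \<in> B \<and> E w} * measure P {w \<in> space P. E w}
      = measure P {w \<in> space P. Yv w \<in> A \<and> E w} * measure P {w \<in> space P. Xf w \<in> B \<and> E w}"
    using g1 g2 g3 g4 bm_space[OF b] by simp
qed


definition Nm :: "unit_data measure \<Rightarrow> bool \<Rightarrow> bool \<Rightarrow> real \<Rightarrow> real" where
  "Nm P z d y = measure P {w. Zv w = z \<and> RDv w \<and> Dv w = d \<and> Yv w = y}"

definition Om :: "unit_data measure \<Rightarrow> bool \<Rightarrow> bool \<Rightarrow> real \<Rightarrow> real" where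
  "Om P z d y = JI P (\<lambda>w. RYv w \<and> Yv w = y) (\<lambda>_. 1) z d"

lemma bin_mass:
  assumes b: "base_model P" and bin: "binary_Y P" and p[measurable]: "Measurable.pred full_space \<Phi>"
  shows "measure P {w. \<Phi> w} = measure P {w. \<Phi> w \<and> Yv w = 0} + measure P {w. \<Phi> w \<and> Yv w = 1}"
proof -
  have m1: "(indicator {w. \<Phi> w} :: _ \<Rightarrow> real) \<in> borel_measurable P" by (rule bm_meas[OF b]) measurable
  have m2: "(\<lambda>w. indicator {w. \<Phi> w \<and> Yv w = 0} w + indicator {w. \<Phi> w \<and> Yv w = 1} w :: real) \<in> borel_measurable P"
    by (rule bm_meas[OF b]) measurable
  have "AE w in P. (indicator {w. \<Phi> w} w :: real) = indicator {w. \<Phi> w \<and> Yv w = 0} w + indicator {w. \<Phi> w \<and> Yv w = 1} w"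
    using bin_AE[OF bin] by eventually_elim (auto simp: indicator_def)
  then have "(\<integral>w. indicator {w. \<Phi> w} w \<partial>P) = (\<integral>w. (indicator {w. \<Phi> w \<and> Yv w = 0} w + indicator {w. \<Phi> w \<and> Yv w = 1} w :: real) \<partial>P)"
    by (rule integral_cong_AE[OF m1 m2])
  moreover have "integrable P (indicator {w. \<Phi> w \<and> Yv w = 0} :: _ \<Rightarrow> real)" by (rule ind_int[OF b]) measurable
  moreover have "integrable P (indicator {w. \<Phi> w \<and> Yv w = 1} :: _ \<Rightarrow> real)" by (rule ind_int[OF b]) measurable
  ultimately show ?thesis using bm_space[OF b] by simp
qed

lemma Nfacts:
  assumes b: "base_model P" and bin: "binary_Y P"
  shows "JI P (\<lambda>_. True) Yv z d = Nm P z d 1"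
    "JI P (\<lambda>_. True) (\<lambda>_. 1) z d = Nm P z d 0 + Nm P z d 1"
    "Om P z d y = measure P {w. Zv w = z \<and> RDv w \<and> Dv w = d \<and> RYv w \<and> Yv w = y}"
proof -
  have p: "Measurable.pred full_space (\<lambda>w. Zv w = z \<and> RDv w \<and> Dv w = d)" by measurable
  show "JI P (\<lambda>_. True) Yv z d = Nm P z d 1"
    using bin_int[OF b bin p] by (simp add: JI_def Nm_def conj_assoc)
  have rT: "Measurable.pred full_space (\<lambda>_. True)" by measurable
  show "JI P (\<lambda>_. True) (\<lambda>_. 1) z d = Nm P z d 0 + Nm P z d 1"
    using bin_mass[OF b bin p] unfolding JI_one[OF b rT] by (simp add: Nm_def conj_assoc)
  have r: "Measurable.pred full_space (\<lambda>w. RYv w \<and> Yv w = y)" by measurable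
  show "Om P z d y = measure P {w. Zv w = z \<and> RDv w \<and> Dv w = d \<and> RYv w \<and> Yv w = y}"
    unfolding Om_def JI_one[OF b r] ..
qed

lemma alg3:
  fixes OF0 OF1 OT0 OT1 MF MT NF0 NF1 NT0 NT1 b0 b1 :: real
  assumes "OF0 = b0 * NF0" "OF1 = b1 * NF1" "OT0 = b0 * NT0" "OT1 = b1 * NT1" "MF = NF0 + NF1" "MT = NT0 + NT1"
    "b0 > 0" "b1 > 0" "NF0 * NT1 - NF1 * NT0 \<noteq> 0"
  shows "NF1 = OF1 * (OF0 * MT - OT0 * MF) / (OF0 * OT1 - OF1 * OT0)"
    "NT1 = OT1 * (OF0 * MT - OT0 * MF) / (OF0 * OT1 - OF1 * OT0)"
proof -
  have d: "NF0 * NT1 - NT0 * NF1 \<noteq> 0" using assms(9) by (simp add: algebra_simps)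
  have e1: "OF0 * MT - OT0 * MF = b0 * (NF0 * NT1 - NT0 * NF1)" using assms by (simp add: algebra_simps)
  have e2: "OF0 * OT1 - OF1 * OT0 = b0 * b1 * (NF0 * NT1 - NT0 * NF1)" using assms by (simp add: algebra_simps)
  show "NF1 = OF1 * (OF0 * MT - OT0 * MF) / (OF0 * OT1 - OF1 * OT0)"
    unfolding e1 e2 using assms(2,7,8) d by (simp add: field_simps)
  show "NT1 = OT1 * (OF0 * MT - OT0 * MF) / (OF0 * OT1 - OF1 * OT0)"
    unfolding e1 e2 using assms(4,7,8) d by (simp add: field_simps)
qed


lemma case3:
  assumes b: "base_model P" and bin: "binary_Y P"
    and ci: "cond_indep P RYv (count_space UNIV) (\<lambda>w. (Zv w, Uv w)) (count_space UNIV) (\<lambda>w. (Dv w, Yv w, RDv w))"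
    and pos: "\<forall>d. \<forall>y \<in> {0, 1}. cprob P RYv (\<lambda>w. Dv w = d \<and> Yv w = y \<and> RDv w) > 0"
    and nind: "\<forall>d. \<not> indep_given P Yv borel Zv (count_space UNIV) (\<lambda>w. Dv w = d \<and> RDv w)"
  shows "cace P = Fform (\<lambda>z d. Om P z d 1 * (Om P False d 0 * JI P (\<lambda>_. True) (\<lambda>_. 1) True d
              - Om P True d 0 * JI P (\<lambda>_. True) (\<lambda>_. 1) False d)
            / (Om P False d 0 * Om P True d 1 - Om P False d 1 * Om P True d 0))
          (JI P (\<lambda>_. True) (\<lambda>_. 1)) (pz P)"
proof -
  have k: "cace P = Fform (JI P (\<lambda>_. True) Yv) (JI P (\<lambda>_. True) (\<lambda>_. 1)) (pz P)"
    by (rule key[where K = "\<lambda>_ _. 1"]) (simp_all add: b)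
  have eq: "JI P (\<lambda>_. True) Yv z d = Om P z d 1 * (Om P False d 0 * JI P (\<lambda>_. True) (\<lambda>_. 1) True d
              - Om P True d 0 * JI P (\<lambda>_. True) (\<lambda>_. 1) False d)
            / (Om P False d 0 * Om P True d 1 - Om P False d 1 * Om P True d 0)" for z d
  proof -
    define \<beta> where "\<beta> = (\<lambda>y. cprob P RYv (\<lambda>w. Dv w = d \<and> Yv w = y \<and> RDv w))"
    have ofac: "Om P x d y = \<beta> y * Nm P x d y" for x y
    proof -
      have E[measurable]: "Measurable.pred full_space (\<lambda>w. Dv w = d \<and> Yv w = y \<and> RDv w)" by measurable
      have fe: "(\<lambda>w. (Dv w, Yv w, RDv w) = (d, y, True)) = (\<lambda>w. Dv w = d \<and> Yv w = y \<and> RDv w)" by auto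
      have ig: "indep_given P RYv (count_space UNIV) (\<lambda>w. (Zv w, Uv w)) (count_space UNIV) (\<lambda>w. Dv w = d \<and> Yv w = y \<and> RDv w)"
      proof -
        have "indep_given P RYv (count_space UNIV) (\<lambda>w. (Zv w, Uv w)) (count_space UNIV)
          (\<lambda>w. (Dv w, Yv w, RDv w) = (d, y, True))" using ci unfolding cond_indep_def by blast
        then show ?thesis by (simp only: fe)
      qed
      have S2: "{x} \<times> UNIV \<in> sets (count_space UNIV)" by simp
      have e1: "{w. RYv w \<and> (Zv w, Uv w) \<in> {x} \<times> UNIV \<and> Dv w = d \<and> Yv w = y \<and> RDv w}
         = {w. Zv w = x \<and> RDv w \<and> Dv w = d \<and> RYv w \<and> Yv w = y}" by auto
      have e2: "{w. (Zv w, Uv w) \<in> {x} \<times> UNIV \<and> Dv w = d \<and> Yv w = y \<and> RDv w}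
         = {w. Zv w = x \<and> RDv w \<and> Dv w = d \<and> Yv w = y}" by auto
      show ?thesis using ry_factor_gen[OF b ig S2 E] unfolding e1 e2 Nfacts(3)[OF b bin] Nm_def \<beta>_def .
    qed
    have det: "Nm P False d 0 * Nm P True d 1 - Nm P False d 1 * Nm P True d 0 \<noteq> 0"
    proof
      assume h: "Nm P False d 0 * Nm P True d 1 - Nm P False d 1 * Nm P True d 0 = 0"
      have X: "Measurable.pred full_space Zv" by measurable
      have E: "Measurable.pred full_space (\<lambda>w. Dv w = d \<and> RDv w)" by measurable
      have se: "measure P {w. Zv w = x \<and> (Dv w = d \<and> RDv w) \<and> Yv w = y} = Nm P x d y" for x y
        unfolding Nm_def by (rule arg_cong[where f = "measure P"]) auto
      have "indep_given P Yv borel Zv (count_space UNIV) (\<lambda>w. Dv w = d \<and> RDv w)"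
        by (rule det_indep[OF b bin X E]) (unfold se, rule h)
      then show False using nind by blast
    qed
    have b0: "\<beta> 0 > 0" and b1: "\<beta> 1 > 0" using pos by (auto simp: \<beta>_def)
    note a = alg3[OF ofac[of False 0] ofac[of False 1] ofac[of True 0] ofac[of True 1]
        Nfacts(2)[OF b bin, of False d] Nfacts(2)[OF b bin, of True d] b0 b1 det]
    show ?thesis using a Nfacts(1)[OF b bin, of z d] by (cases z) auto
  qed
  have "JI P (\<lambda>_. True) Yv = (\<lambda>z d. Om P z d 1 * (Om P False d 0 * JI P (\<lambda>_. True) (\<lambda>_. 1) True d
              - Om P True d 0 * JI P (\<lambda>_. True) (\<lambda>_. 1) False d)
            / (Om P False d 0 * Om P True d 1 - Om P False d 1 * Om P True d 0))"
    using eq by (intro ext) simp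
  then show ?thesis using k by simp
qed

lemma case4:
  assumes b: "base_model P" and bin: "binary_Y P"
    and ci: "cond_indep P RYv (count_space UNIV) (\<lambda>w. (Uv w, Dv w)) (count_space UNIV) (\<lambda>w. (Zv w, Yv w, RDv w))"
    and pos: "\<forall>z. \<forall>y \<in> {0, 1}. cprob P RYv (\<lambda>w. Zv w = z \<and> Yv w = y \<and> RDv w) > 0"
    and nind: "\<forall>z. \<not> indep_given P Yv borel Dv (count_space UNIV) (\<lambda>w. Zv w = z \<and> RDv w)"
  shows "cace P = Fform (\<lambda>z d. Om P z d 1 * (Om P z False 0 * JI P (\<lambda>_. True) (\<lambda>_. 1) z True
              - Om P z True 0 * JI P (\<lambda>_. True) (\<lambda>_. 1) z False)
            / (Om P z False 0 * Om P z True 1 - Om P z False 1 * Om P z True 0))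
          (JI P (\<lambda>_. True) (\<lambda>_. 1)) (pz P)"
proof -
  have k: "cace P = Fform (JI P (\<lambda>_. True) Yv) (JI P (\<lambda>_. True) (\<lambda>_. 1)) (pz P)"
    by (rule key[where K = "\<lambda>_ _. 1"]) (simp_all add: b)
  have eq: "JI P (\<lambda>_. True) Yv z d = Om P z d 1 * (Om P z False 0 * JI P (\<lambda>_. True) (\<lambda>_. 1) z True
              - Om P z True 0 * JI P (\<lambda>_. True) (\<lambda>_. 1) z False)
            / (Om P z False 0 * Om P z True 1 - Om P z False 1 * Om P z True 0)" for z d
  proof -
    define \<beta> where "\<beta> = (\<lambda>y. cprob P RYv (\<lambda>w. Zv w = z \<and> Yv w = y \<and> RDv w))"
    have ofac: "Om P z x y = \<beta> y * Nm P z x y" for x y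
    proof -
      have E[measurable]: "Measurable.pred full_space (\<lambda>w. Zv w = z \<and> Yv w = y \<and> RDv w)" by measurable
      have fe: "(\<lambda>w. (Zv w, Yv w, RDv w) = (z, y, True)) = (\<lambda>w. Zv w = z \<and> Yv w = y \<and> RDv w)" by auto
      have ig: "indep_given P RYv (count_space UNIV) (\<lambda>w. (Uv w, Dv w)) (count_space UNIV) (\<lambda>w. Zv w = z \<and> Yv w = y \<and> RDv w)"
      proof -
        have "indep_given P RYv (count_space UNIV) (\<lambda>w. (Uv w, Dv w)) (count_space UNIV)
          (\<lambda>w. (Zv w, Yv w, RDv w) = (z, y, True))" using ci unfolding cond_indep_def by blast
        then show ?thesis by (simp only: fe)
      qed
      have S2: "UNIV \<times> {x} \<in> sets (count_space UNIV)" by simp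
      have e1: "{w. RYv w \<and> (Uv w, Dv w) \<in> UNIV \<times> {x} \<and> Zv w = z \<and> Yv w = y \<and> RDv w}
         = {w. Zv w = z \<and> RDv w \<and> Dv w = x \<and> RYv w \<and> Yv w = y}" by auto
      have e2: "{w. (Uv w, Dv w) \<in> UNIV \<times> {x} \<and> Zv w = z \<and> Yv w = y \<and> RDv w}
         = {w. Zv w = z \<and> RDv w \<and> Dv w = x \<and> Yv w = y}" by auto
      show ?thesis using ry_factor_gen[OF b ig S2 E] unfolding e1 e2 Nfacts(3)[OF b bin] Nm_def \<beta>_def .
    qed
    have det: "Nm P z False 0 * Nm P z True 1 - Nm P z False 1 * Nm P z True 0 \<noteq> 0"
    proof
      assume h: "Nm P z False 0 * Nm P z True 1 - Nm P z False 1 * Nm P z True 0 = 0"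
      have X: "Measurable.pred full_space Dv" by measurable
      have E: "Measurable.pred full_space (\<lambda>w. Zv w = z \<and> RDv w)" by measurable
      have se: "measure P {w. Dv w = x \<and> (Zv w = z \<and> RDv w) \<and> Yv w = y} = Nm P z x y" for x y
        unfolding Nm_def by (rule arg_cong[where f = "measure P"]) auto
      have "indep_given P Yv borel Dv (count_space UNIV) (\<lambda>w. Zv w = z \<and> RDv w)"
        by (rule det_indep[OF b bin X E]) (unfold se, rule h)
      then show False using nind by blast
    qed
    have b0: "\<beta> 0 > 0" and b1: "\<beta> 1 > 0" using pos by (auto simp: \<beta>_def)
    note a = alg3[OF ofac[of False 0] ofac[of False 1] ofac[of True 0] ofac[of True 1]
        Nfacts(2)[OF b bin, of z False] Nfacts(2)[OF b bin, of z True] b0 b1 det]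
    show ?thesis using a Nfacts(1)[OF b bin, of z d] by (cases d) auto
  qed
  have "JI P (\<lambda>_. True) Yv = (\<lambda>z d. Om P z d 1 * (Om P z False 0 * JI P (\<lambda>_. True) (\<lambda>_. 1) z True
              - Om P z True 0 * JI P (\<lambda>_. True) (\<lambda>_. 1) z False)
            / (Om P z False 0 * Om P z True 1 - Om P z False 1 * Om P z True 0))"
    using eq by (intro ext) simp
  then show ?thesis using k by simp
qed


lemma dlemma:
  assumes b: "base_model P" and R[measurable]: "Measurable.pred full_space R"
    and h: "\<And>z u. JIu P R (\<lambda>_. 1) z u = pz P z * c u (dval u z) * g u z"
    and gA: "g Always False = g Always True" and gN: "g Never True = g Never False"
  shows "JI P R (\<lambda>_. 1) True True / pz P True - JI P R (\<lambda>_. 1) False True / pz P False = c Complier True * g Complier True"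
    "JI P R (\<lambda>_. 1) False False / pz P False - JI P R (\<lambda>_. 1) True False / pz P True = c Complier False * g Complier False"
proof -
  interpret prob_space P using bm_prob[OF b] .
  have i1: "integrable P (\<lambda>_. 1::real)" by simp
  have p: "pz P True > 0" "pz P False > 0" using bm_pz[OF b] by auto
  have M11: "JI P R (\<lambda>_. 1) True True = pz P True * c Always True * g Always True + pz P True * c Complier True * g Complier True"
    using split4[OF b R i1, of True True] h[of True Always] h[of True Complier] by (simp add: sel_def)
  have M01: "JI P R (\<lambda>_. 1) False True = pz P False * c Always True * g Always True"
    using split4[OF b R i1, of False True] h[of False Always] defier_int[OF b] gA by (simp add: sel_def)
  have M00: "JI P R (\<lambda>_. 1) False False = pz P False * c Complier False * g Complier False + pz P False * c Never False * g Never False"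
    using split4[OF b R i1, of False False] h[of False Never] h[of False Complier] by (simp add: sel_def)
  have M10: "JI P R (\<lambda>_. 1) True False = pz P True * c Never False * g Never False"
    using split4[OF b R i1, of True False] h[of True Never] defier_int[OF b] gN by (simp add: sel_def)
  show "JI P R (\<lambda>_. 1) True True / pz P True - JI P R (\<lambda>_. 1) False True / pz P False = c Complier True * g Complier True"
    unfolding M11 M01 using p by (simp add: field_simps)
  show "JI P R (\<lambda>_. 1) False False / pz P False - JI P R (\<lambda>_. 1) True False / pz P True = c Complier False * g Complier False"
    unfolding M00 M10 using p by (simp add: field_simps)
qed

lemma bin_pot:
  assumes b: "base_model P" and bin: "binary_Y P"
  shows "AE w in P. Yz z w = 0 \<or> Yz z w = 1"
proof -
  interpret prob_space P using bm_prob[OF b] .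
  define T where "T = (\<lambda>x::bool\<times>bool\<times>real\<times>real. (if z then fst (snd (snd x)) else snd (snd (snd x))) \<notin> {0, 1})"
  have Tm: "Measurable.pred (count_space UNIV \<Otimes>\<^sub>M count_space UNIV \<Otimes>\<^sub>M borel \<Otimes>\<^sub>M borel) T"
    unfolding T_def by measurable
  note zi = Zind[OF b Tm, of z]
  have e1: "{w. T (D1v w, D0v w, Y1v w, Y0v w)} = {w. Yz z w \<notin> {0, 1}}" by (auto simp: T_def Yz_def)
  have e2: "{w. Zv w = z \<and> T (D1v w, D0v w, Y1v w, Y0v w)} = {w. Zv w = z \<and> Yv w \<notin> {0, 1}}"
    by (auto simp: T_def Yv_def Yz_def)
  have s1: "{w. Yv w \<notin> {0, 1}} \<in> sets P" by (rule ev_sets[OF b]) measurable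
  have s2: "{w. Yz z w \<notin> {0, 1}} \<in> sets P" by (rule ev_sets[OF b]) measurable
  have "AE w in P. w \<notin> {w. Yv w \<notin> {0, 1}}" using bin unfolding binary_Y_def by simp
  then have n0: "measure P {w. Yv w \<notin> {0, 1}} = 0"
    using AE_iff_measurable[OF s1] bm_space[OF b] by (simp add: emeasure_eq_measure)
  have "measure P {w. Zv w = z \<and> Yv w \<notin> {0, 1}} \<le> measure P {w. Yv w \<notin> {0, 1}}"
    by (rule finite_measure_mono[OF _ s1]) auto
  then have "measure P {w. Zv w = z \<and> Yv w \<notin> {0, 1}} = 0" using n0 measure_nonneg[of P "{w. Zv w = z \<and> Yv w \<notin> {0, 1}}"] by linarith
  then have "pz P z * measure P {w. Yz z w \<notin> {0, 1}} = 0" using zi unfolding e1 e2 pz_def by simp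
  moreover have "pz P z > 0" using bm_pz[OF b] by (cases z) auto
  ultimately have "measure P {w. Yz z w \<notin> {0, 1}} = 0" by simp
  then have "emeasure P {w. Yz z w \<notin> {0, 1}} = 0" by (simp add: emeasure_eq_measure)
  then have "AE w in P. w \<notin> {w. Yz z w \<notin> {0, 1}}" using AE_iff_measurable[OF s2] bm_space[OF b] by simp
  then show ?thesis by simp
qed

lemma alg5:
  fixes kT kF pic b0 b1 x0 x1 y0 y1 :: real
  assumes "kT > 0" "kF > 0" "pic > 0" "b0 > 0" "b1 > 0" "x0 + x1 = pic" "y0 + y1 = pic"
  shows "(x1 - y1) / pic =
    (let a1 = (b1 * kT * x1) / (kT * pic); a0 = (b0 * kT * x0) / (kT * pic);
         c1 = (b1 * kF * y1) / (kF * pic); c0 = (b0 * kF * y0) / (kF * pic)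
     in if a1 * c0 - a0 * c1 = 0 then 0 else (a1 - c1) * (c0 - a0) / (a1 * c0 - a0 * c1))"
proof -
  define p where "p = x1 / pic"
  define q where "q = y1 / pic"
  have a1: "(b1 * kT * x1) / (kT * pic) = b1 * p" using assms(1,2,3) by (simp add: p_def field_simps)
  have x0: "x0 = pic - x1" and y0: "y0 = pic - y1" using assms by auto
  have a0: "(b0 * kT * x0) / (kT * pic) = b0 * (1 - p)" unfolding x0 using assms(1,2,3) by (simp add: p_def field_simps)
  have c1: "(b1 * kF * y1) / (kF * pic) = b1 * q" using assms(1,2,3) by (simp add: q_def field_simps)
  have c0: "(b0 * kF * y0) / (kF * pic) = b0 * (1 - q)" unfolding y0 using assms(1,2,3) by (simp add: q_def field_simps)
  have det: "b1 * p * (b0 * (1 - q)) - b0 * (1 - p) * (b1 * q) = b0 * b1 * (p - q)" by (simp add: algebra_simps)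
  have l: "(x1 - y1) / pic = p - q" using assms by (simp add: p_def q_def diff_divide_distrib)
  have num: "(b1 * p - b1 * q) * (b0 * (1 - q) - b0 * (1 - p)) = (b0 * b1 * (p - q)) * (p - q)"
    by (simp add: algebra_simps)
  show ?thesis unfolding Let_def a1 a0 c1 c0 det l num
  proof (cases "p = q")
    case False
    then have "b0 * b1 * (p - q) \<noteq> 0" using assms by simp
    then show "p - q = (if b0 * b1 * (p - q) = 0 then 0 else b0 * b1 * (p - q) * (p - q) / (b0 * b1 * (p - q)))"
      by simp
  qed simp
qed


lemma binV_int:
  fixes V :: "unit_data \<Rightarrow> real"
  assumes b: "base_model P" and ae: "AE w in P. V w = 0 \<or> V w = 1" and V[measurable]: "V \<in> borel_measurable full_space"
    and p[measurable]: "Measurable.pred full_space \<Phi>"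
  shows "(\<integral>w. indicator {w. \<Phi> w} w * V w \<partial>P) = measure P {w. \<Phi> w \<and> V w = 1}"
proof -
  have Vc[measurable]: "Measurable.pred full_space (\<lambda>w. V w = c)" for c
  proof -
    have "V -` {c} \<inter> space full_space \<in> sets full_space" by (rule measurable_sets[OF V]) auto
    then show ?thesis by (simp add: pred_def space_full vimage_def)
  qed
  have m1: "(\<lambda>w. indicator {w. \<Phi> w} w * V w) \<in> borel_measurable P" by (rule bm_meas[OF b]) measurable
  have m2: "(indicator {w. \<Phi> w \<and> V w = 1} :: _ \<Rightarrow> real) \<in> borel_measurable P" by (rule bm_meas[OF b]) measurable
  have "AE w in P. indicator {w. \<Phi> w} w * V w = (indicator {w. \<Phi> w \<and> V w = 1} w :: real)"
    using ae by eventually_elim (auto simp: indicator_def)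
  then have "(\<integral>w. indicator {w. \<Phi> w} w * V w \<partial>P) = (\<integral>w. indicator {w. \<Phi> w \<and> V w = 1} w \<partial>P)"
    by (rule integral_cong_AE[OF m1 m2])
  also have "\<dots> = measure P {w. \<Phi> w \<and> V w = 1}" by (rule ind_meas[OF b]) measurable
  finally show ?thesis .
qed

lemma binV_mass:
  fixes V :: "unit_data \<Rightarrow> real"
  assumes b: "base_model P" and ae: "AE w in P. V w = 0 \<or> V w = 1" and V[measurable]: "V \<in> borel_measurable full_space"
    and p[measurable]: "Measurable.pred full_space \<Phi>"
  shows "measure P {w. \<Phi> w} = measure P {w. \<Phi> w \<and> V w = 0} + measure P {w. \<Phi> w \<and> V w = 1}"
proof -
  have Vc[measurable]: "Measurable.pred full_space (\<lambda>w. V w = c)" for c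
  proof -
    have "V -` {c} \<inter> space full_space \<in> sets full_space" by (rule measurable_sets[OF V]) auto
    then show ?thesis by (simp add: pred_def space_full vimage_def)
  qed
  have m1: "(indicator {w. \<Phi> w} :: _ \<Rightarrow> real) \<in> borel_measurable P" by (rule bm_meas[OF b]) measurable
  have m2: "(\<lambda>w. indicator {w. \<Phi> w \<and> V w = 0} w + indicator {w. \<Phi> w \<and> V w = 1} w :: real) \<in> borel_measurable P"
    by (rule bm_meas[OF b]) measurable
  have "AE w in P. (indicator {w. \<Phi> w} w :: real) = indicator {w. \<Phi> w \<and> V w = 0} w + indicator {w. \<Phi> w \<and> V w = 1} w"
    using ae by eventually_elim (auto simp: indicator_def)
  then have "(\<integral>w. indicator {w. \<Phi> w} w \<partial>P) = (\<integral>w. (indicator {w. \<Phi> w \<and> V w = 0} w + indicator {w. \<Phi> w \<and> V w = 1} w :: real) \<partial>P)"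
    by (rule integral_cong_AE[OF m1 m2])
  moreover have "integrable P (indicator {w. \<Phi> w \<and> V w = 0} :: _ \<Rightarrow> real)" by (rule ind_int[OF b]) measurable
  moreover have "integrable P (indicator {w. \<Phi> w \<and> V w = 1} :: _ \<Rightarrow> real)" by (rule ind_int[OF b]) measurable
  ultimately show ?thesis using bm_space[OF b] by simp
qed

definition qm :: "unit_data measure \<Rightarrow> comp \<Rightarrow> bool \<Rightarrow> real \<Rightarrow> real" where
  "qm P u z y = measure P {w. Uv w = u \<and> Yz z w = y}"

lemma qm_an:
  assumes b: "base_model P" and u: "u \<in> {Always, Never}"
  shows "qm P u False y = qm P u True y"
proof -
  have ae: "AE w in P. Uv w \<in> {Always, Never} \<longrightarrow> Y1v w = Y0v w" using b by (simp add: base_model_def)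
  have s1: "{w. Uv w = u \<and> Yz False w = y} \<in> sets P" by (rule ev_sets[OF b]) measurable
  have s2: "{w. Uv w = u \<and> Yz True w = y} \<in> sets P" by (rule ev_sets[OF b]) measurable
  have "AE w in P. w \<in> {w. Uv w = u \<and> Yz False w = y} \<longleftrightarrow> w \<in> {w. Uv w = u \<and> Yz True w = y}"
    using ae by eventually_elim (use u in \<open>auto simp: Yz_def\<close>)
  then show ?thesis unfolding qm_def by (rule measure_eq_AE[OF _ s1 s2])
qed

definition F5 :: "(bool \<Rightarrow> bool \<Rightarrow> real \<Rightarrow> real) \<Rightarrow> (bool \<Rightarrow> bool \<Rightarrow> real) \<Rightarrow> (bool \<Rightarrow> real) \<Rightarrow> real" where
  "F5 Ob M p = (let T1 = M True True / p True - M False True / p False;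
                  T0 = M False False / p False - M True False / p True;
                  a1 = (Ob True True 1 / p True - Ob False True 1 / p False) / T1;
                  a0 = (Ob True True 0 / p True - Ob False True 0 / p False) / T1;
                  c1 = (Ob False False 1 / p False - Ob True False 1 / p True) / T0;
                  c0 = (Ob False False 0 / p False - Ob True False 0 / p True) / T0
    in if a1 * c0 - a0 * c1 = 0 then 0 else (a1 - c1) * (c0 - a0) / (a1 * c0 - a0 * c1))"

lemma case5:
  assumes b: "base_model P" and bin: "binary_Y P"
    and ci: "cond_indep P RYv (count_space UNIV) (\<lambda>w. (Zv w, Dv w)) (count_space UNIV) (\<lambda>w. (Uv w, Yv w, RDv w))"
    and pos: "\<forall>y \<in> {0, 1}. cprob P RYv (\<lambda>w. Uv w = Complier \<and> Yv w = y \<and> RDv w) > 0"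
  shows "cace P = F5 (Om P) (JI P (\<lambda>_. True) (\<lambda>_. 1)) (pz P)"
proof -
  define \<beta> where "\<beta> = (\<lambda>u y. cprob P RYv (\<lambda>w. Uv w = u \<and> Yv w = y \<and> RDv w))"
  have ufac: "JIu P (\<lambda>w. RYv w \<and> Yv w = y) (\<lambda>_. 1) z u = pz P z * (\<beta> u y * alpha P u (dval u z)) * qm P u z y" for z u y
  proof -
    have E[measurable]: "Measurable.pred full_space (\<lambda>w. Uv w = u \<and> Yv w = y \<and> RDv w)" by measurable
    have fe: "(\<lambda>w. (Uv w, Yv w, RDv w) = (u, y, True)) = (\<lambda>w. Uv w = u \<and> Yv w = y \<and> RDv w)" by auto
    have ig: "indep_given P RYv (count_space UNIV) (\<lambda>w. (Zv w, Dv w)) (count_space UNIV) (\<lambda>w. Uv w = u \<and> Yv w = y \<and> RDv w)"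
    proof -
      have "indep_given P RYv (count_space UNIV) (\<lambda>w. (Zv w, Dv w)) (count_space UNIV)
        (\<lambda>w. (Uv w, Yv w, RDv w) = (u, y, True))" using ci unfolding cond_indep_def by blast
      then show ?thesis by (simp only: fe)
    qed
    have S2: "{(z, dval u z)} \<in> sets (count_space UNIV)" by simp
    have e1: "{w. RYv w \<and> (Zv w, Dv w) \<in> {(z, dval u z)} \<and> Uv w = u \<and> Yv w = y \<and> RDv w}
       = {w. Zv w = z \<and> RDv w \<and> Uv w = u \<and> RYv w \<and> Yv w = y}" using UD by auto
    have e2: "{w. (Zv w, Dv w) \<in> {(z, dval u z)} \<and> Uv w = u \<and> Yv w = y \<and> RDv w}
       = {w. Zv w = z \<and> RDv w \<and> Uv w = u \<and> Yv w = y}" using UD by auto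
    have r1: "Measurable.pred full_space (\<lambda>w. RYv w \<and> Yv w = y)" by measurable
    have r2: "Measurable.pred full_space (\<lambda>w. Yv w \<in> {y})" by measurable
    have "JIu P (\<lambda>w. RYv w \<and> Yv w = y) (\<lambda>_. 1) z u = \<beta> u y * JIu P (\<lambda>w. Yv w \<in> {y}) (\<lambda>_. 1) z u"
      using ry_factor_gen[OF b ig S2 E] unfolding e1 e2 JIu_one[OF b r1] JIu_one[OF b r2] \<beta>_def by simp
    also have "\<dots> = \<beta> u y * (pz P z * alpha P u (dval u z) * qm P u z y)"
      using rd_mass[OF b, of "{y}" z u] by (simp add: pz_def alpha_def qm_def)
    finally show ?thesis by simp
  qed
  have rT: "Measurable.pred full_space (\<lambda>_. True)" by measurable
  have d5: "Om P True True y / pz P True - Om P False True y / pz P False = \<beta> Complier y * alpha P Complier True * qm P Complier True y"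
    "Om P False False y / pz P False - Om P True False y / pz P True = \<beta> Complier y * alpha P Complier False * qm P Complier False y" for y
  proof -
    have r: "Measurable.pred full_space (\<lambda>w. RYv w \<and> Yv w = y)" by measurable
    note dl = dlemma[OF b r, where c = "\<lambda>u d. \<beta> u y * alpha P u d" and g = "\<lambda>u z. qm P u z y"]
    have h: "\<And>z u. JIu P (\<lambda>w. RYv w \<and> Yv w = y) (\<lambda>_. 1) z u = pz P z * (\<beta> u y * alpha P u (dval u z)) * qm P u z y"
      by (rule ufac)
    show "Om P True True y / pz P True - Om P False True y / pz P False = \<beta> Complier y * alpha P Complier True * qm P Complier True y"
      using dl(1)[OF h qm_an[OF b] qm_an[OF b, symmetric]] unfolding Om_def by simp
    show "Om P False False y / pz P False - Om P True False y / pz P True = \<beta> Complier y * alpha P Complier False * qm P Complier False y"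
      using dl(2)[OF h qm_an[OF b] qm_an[OF b, symmetric]] unfolding Om_def by simp
  qed
  have t5: "JI P (\<lambda>_. True) (\<lambda>_. 1) True True / pz P True - JI P (\<lambda>_. True) (\<lambda>_. 1) False True / pz P False = alpha P Complier True * piu P Complier"
    "JI P (\<lambda>_. True) (\<lambda>_. 1) False False / pz P False - JI P (\<lambda>_. True) (\<lambda>_. 1) True False / pz P True = alpha P Complier False * piu P Complier"
    using dlemma[OF b rT, where c = "\<lambda>u d. alpha P u d" and g = "\<lambda>u z. piu P u", OF rd_mass1'[OF b]] by simp_all
  have sumq: "qm P Complier z 0 + qm P Complier z 1 = piu P Complier" for z
  proof -
    have p: "Measurable.pred full_space (\<lambda>w. Uv w = Complier)" by measurable
    have V: "Yz z \<in> borel_measurable full_space" by measurable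
    show ?thesis using binV_mass[OF b bin_pot[OF b bin, of z] V p] by (simp add: qm_def piu_def)
  qed
  have icq: "Icu P Complier z = qm P Complier z 1" for z
  proof -
    have p: "Measurable.pred full_space (\<lambda>w. Uv w = Complier)" by measurable
    have V: "Yz z \<in> borel_measurable full_space" by measurable
    show ?thesis using binV_int[OF b bin_pot[OF b bin, of z] V p] by (simp add: qm_def Icu_def)
  qed
  have b0: "\<beta> Complier 0 > 0" and b1: "\<beta> Complier 1 > 0" using pos by (auto simp: \<beta>_def)
  have "cace P = (qm P Complier True 1 - qm P Complier False 1) / piu P Complier"
    using cace_eq[OF b] icq by simp
  also have "\<dots> = F5 (Om P) (JI P (\<lambda>_. True) (\<lambda>_. 1)) (pz P)"
    unfolding F5_def d5 t5 Let_def
    by (rule alg5[OF bm_alpha[OF b] bm_alpha[OF b] bm_pic[OF b] b0 b1 sumq sumq, unfolded Let_def])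
  finally show ?thesis .
qed




lemma id1: "cace_identifiable (\<lambda>P. base_model P \<and>
      cond_indep P RYv (count_space UNIV) (\<lambda>w. (Uv w, Yv w)) (count_space UNIV \<Otimes>\<^sub>M borel)
        (\<lambda>w. (Zv w, Dv w, RDv w)) \<and>
      (\<forall>z d. cprob P RYv (\<lambda>w. Zv w = z \<and> Dv w = d \<and> RDv w) > 0))"
  unfolding cace_identifiable_def
proof (intro allI impI, elim conjE)
  fix P P' assume b: "base_model P" and c: "cond_indep P RYv (count_space UNIV) (\<lambda>w. (Uv w, Yv w)) (count_space UNIV \<Otimes>\<^sub>M borel)
        (\<lambda>w. (Zv w, Dv w, RDv w))" and p: "\<forall>z d. cprob P RYv (\<lambda>w. Zv w = z \<and> Dv w = d \<and> RDv w) > 0"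
    and b': "base_model P'" and c': "cond_indep P' RYv (count_space UNIV) (\<lambda>w. (Uv w, Yv w)) (count_space UNIV \<Otimes>\<^sub>M borel)
        (\<lambda>w. (Zv w, Dv w, RDv w))" and p': "\<forall>z d. cprob P' RYv (\<lambda>w. Zv w = z \<and> Dv w = d \<and> RDv w) > 0"
    and L: "obs_law P = obs_law P'"
  have e1: "JI P RYv Yv = JI P' RYv Yv" using obs_JI_RY[OF b b' L] by (intro ext) simp
  have e4: "JI P RYv (\<lambda>_. 1) = JI P' RYv (\<lambda>_. 1)" using obs_MRY[OF b b' L] by (intro ext) simp
  have e2: "JI P (\<lambda>_. True) (\<lambda>_. 1) = JI P' (\<lambda>_. True) (\<lambda>_. 1)" using obs_M1[OF b b' L] by (intro ext) simp
  have e3: "pz P = pz P'" using obs_pz[OF b b' L] by (intro ext) simp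
  show "cace P = cace P'" unfolding case1[OF b c p] case1[OF b' c' p'] e1 e2 e3 e4 ..
qed

lemma id2: "cace_identifiable (\<lambda>P. base_model P \<and>
      cond_indep P RYv (count_space UNIV) (\<lambda>w. (Zv w, Yv w)) (count_space UNIV \<Otimes>\<^sub>M borel)
        (\<lambda>w. (Uv w, Dv w, RDv w)) \<and>
      (\<forall>d. cprob P RYv (\<lambda>w. Uv w = Complier \<and> Dv w = d \<and> RDv w) > 0))"
  unfolding cace_identifiable_def
proof (intro allI impI, elim conjE)
  fix P P' assume b: "base_model P" and c: "cond_indep P RYv (count_space UNIV) (\<lambda>w. (Zv w, Yv w)) (count_space UNIV \<Otimes>\<^sub>M borel)
        (\<lambda>w. (Uv w, Dv w, RDv w))" and p: "\<forall>d. cprob P RYv (\<lambda>w. Uv w = Complier \<and> Dv w = d \<and> RDv w) > 0"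
    and b': "base_model P'" and c': "cond_indep P' RYv (count_space UNIV) (\<lambda>w. (Zv w, Yv w)) (count_space UNIV \<Otimes>\<^sub>M borel)
        (\<lambda>w. (Uv w, Dv w, RDv w))" and p': "\<forall>d. cprob P' RYv (\<lambda>w. Uv w = Complier \<and> Dv w = d \<and> RDv w) > 0"
    and L: "obs_law P = obs_law P'"
  have e1: "JI P RYv Yv = JI P' RYv Yv" using obs_JI_RY[OF b b' L] by (intro ext) simp
  have e2: "JI P RYv (\<lambda>_. 1) = JI P' RYv (\<lambda>_. 1)" using obs_MRY[OF b b' L] by (intro ext) simp
  have e3: "pz P = pz P'" using obs_pz[OF b b' L] by (intro ext) simp
  show "cace P = cace P'" unfolding case2[OF b c p] case2[OF b' c' p'] e1 e2 e3 ..
qed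

lemma obs_Om: "base_model P \<Longrightarrow> base_model P' \<Longrightarrow> obs_law P = obs_law P' \<Longrightarrow> Om P = Om P'"
  unfolding Om_def using obs_MRYy by (intro ext) blast

lemma id3: "cace_identifiable (\<lambda>P. base_model P \<and> binary_Y P \<and> two_sided P \<and>
      cond_indep P RYv (count_space UNIV) (\<lambda>w. (Zv w, Uv w)) (count_space UNIV)
        (\<lambda>w. (Dv w, Yv w, RDv w)) \<and>
      (\<forall>d. \<forall>y \<in> {0, 1}. cprob P RYv (\<lambda>w. Dv w = d \<and> Yv w = y \<and> RDv w) > 0) \<and>
      (\<forall>d. \<not> indep_given P Yv borel Zv (count_space UNIV) (\<lambda>w. Dv w = d \<and> RDv w)))"
  unfolding cace_identifiable_def
proof (intro allI impI, elim conjE)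
  fix P P'
  assume b: "base_model P" and bin: "binary_Y P" and c: "cond_indep P RYv (count_space UNIV) (\<lambda>w. (Zv w, Uv w)) (count_space UNIV)
        (\<lambda>w. (Dv w, Yv w, RDv w))" and p: "\<forall>d. \<forall>y \<in> {0, 1}. cprob P RYv (\<lambda>w. Dv w = d \<and> Yv w = y \<and> RDv w) > 0"
    and n: "\<forall>d. \<not> indep_given P Yv borel Zv (count_space UNIV) (\<lambda>w. Dv w = d \<and> RDv w)"
  assume b': "base_model P'" and bin': "binary_Y P'" and c': "cond_indep P' RYv (count_space UNIV) (\<lambda>w. (Zv w, Uv w)) (count_space UNIV)
        (\<lambda>w. (Dv w, Yv w, RDv w))" and p': "\<forall>d. \<forall>y \<in> {0, 1}. cprob P' RYv (\<lambda>w. Dv w = d \<and> Yv w = y \<and> RDv w) > 0"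
    and n': "\<forall>d. \<not> indep_given P' Yv borel Zv (count_space UNIV) (\<lambda>w. Dv w = d \<and> RDv w)"
    and L: "obs_law P = obs_law P'"
  have e1: "Om P = Om P'" by (rule obs_Om[OF b b' L])
  have e2: "JI P (\<lambda>_. True) (\<lambda>_. 1) = JI P' (\<lambda>_. True) (\<lambda>_. 1)" using obs_M1[OF b b' L] by (intro ext) simp
  have e3: "pz P = pz P'" using obs_pz[OF b b' L] by (intro ext) simp
  show "cace P = cace P'" unfolding case3[OF b bin c p n] case3[OF b' bin' c' p' n'] e1 e2 e3 ..
qed

lemma id4: "cace_identifiable (\<lambda>P. base_model P \<and> binary_Y P \<and> two_sided P \<and>
      cond_indep P RYv (count_space UNIV) (\<lambda>w. (Uv w, Dv w)) (count_space UNIV)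
        (\<lambda>w. (Zv w, Yv w, RDv w)) \<and>
      (\<forall>z. \<forall>y \<in> {0, 1}. cprob P RYv (\<lambda>w. Zv w = z \<and> Yv w = y \<and> RDv w) > 0) \<and>
      (\<forall>z. \<not> indep_given P Yv borel Dv (count_space UNIV) (\<lambda>w. Zv w = z \<and> RDv w)))"
  unfolding cace_identifiable_def
proof (intro allI impI, elim conjE)
  fix P P'
  assume b: "base_model P" and bin: "binary_Y P" and c: "cond_indep P RYv (count_space UNIV) (\<lambda>w. (Uv w, Dv w)) (count_space UNIV)
        (\<lambda>w. (Zv w, Yv w, RDv w))" and p: "\<forall>z. \<forall>y \<in> {0, 1}. cprob P RYv (\<lambda>w. Zv w = z \<and> Yv w = y \<and> RDv w) > 0"
    and n: "\<forall>z. \<not> indep_given P Yv borel Dv (count_space UNIV) (\<lambda>w. Zv w = z \<and> RDv w)"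
  assume b': "base_model P'" and bin': "binary_Y P'" and c': "cond_indep P' RYv (count_space UNIV) (\<lambda>w. (Uv w, Dv w)) (count_space UNIV)
        (\<lambda>w. (Zv w, Yv w, RDv w))" and p': "\<forall>z. \<forall>y \<in> {0, 1}. cprob P' RYv (\<lambda>w. Zv w = z \<and> Yv w = y \<and> RDv w) > 0"
    and n': "\<forall>z. \<not> indep_given P' Yv borel Dv (count_space UNIV) (\<lambda>w. Zv w = z \<and> RDv w)"
    and L: "obs_law P = obs_law P'"
  have e1: "Om P = Om P'" by (rule obs_Om[OF b b' L])
  have e2: "JI P (\<lambda>_. True) (\<lambda>_. 1) = JI P' (\<lambda>_. True) (\<lambda>_. 1)" using obs_M1[OF b b' L] by (intro ext) simp
  have e3: "pz P = pz P'" using obs_pz[OF b b' L] by (intro ext) simp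
  show "cace P = cace P'" unfolding case4[OF b bin c p n] case4[OF b' bin' c' p' n'] e1 e2 e3 ..
qed

lemma id5: "cace_identifiable (\<lambda>P. base_model P \<and> binary_Y P \<and>
      cond_indep P RYv (count_space UNIV) (\<lambda>w. (Zv w, Dv w)) (count_space UNIV)
        (\<lambda>w. (Uv w, Yv w, RDv w)) \<and>
      (\<forall>y \<in> {0, 1}. cprob P RYv (\<lambda>w. Uv w = Complier \<and> Yv w = y \<and> RDv w) > 0))"
  unfolding cace_identifiable_def
proof (intro allI impI, elim conjE)
  fix P P'
  assume b: "base_model P" and bin: "binary_Y P" and c: "cond_indep P RYv (count_space UNIV) (\<lambda>w. (Zv w, Dv w)) (count_space UNIV)
        (\<lambda>w. (Uv w, Yv w, RDv w))" and p: "\<forall>y \<in> {0, 1}. cprob P RYv (\<lambda>w. Uv w = Complier \<and> Yv w = y \<and> RDv w) > 0"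
  assume b': "base_model P'" and bin': "binary_Y P'" and c': "cond_indep P' RYv (count_space UNIV) (\<lambda>w. (Zv w, Dv w)) (count_space UNIV)
        (\<lambda>w. (Uv w, Yv w, RDv w))" and p': "\<forall>y \<in> {0, 1}. cprob P' RYv (\<lambda>w. Uv w = Complier \<and> Yv w = y \<and> RDv w) > 0"
    and L: "obs_law P = obs_law P'"
  have e1: "Om P = Om P'" by (rule obs_Om[OF b b' L])
  have e2: "JI P (\<lambda>_. True) (\<lambda>_. 1) = JI P' (\<lambda>_. True) (\<lambda>_. 1)" using obs_M1[OF b b' L] by (intro ext) simp
  have e3: "pz P = pz P'" using obs_pz[OF b b' L] by (intro ext) simp
  show "cace P = cace P'" unfolding case5[OF b bin c p] case5[OF b' bin' c' p'] e1 e2 e3 ..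
qed


theorem theorem3:
  shows
  "cace_identifiable (\<lambda>P. base_model P \<and>
      cond_indep P RYv (count_space UNIV) (\<lambda>w. (Uv w, Yv w)) (count_space UNIV \<Otimes>\<^sub>M borel)
        (\<lambda>w. (Zv w, Dv w, RDv w)) \<and>
      (\<forall>z d. cprob P RYv (\<lambda>w. Zv w = z \<and> Dv w = d \<and> RDv w) > 0)) \<and>
  cace_identifiable (\<lambda>P. base_model P \<and>
      cond_indep P RYv (count_space UNIV) (\<lambda>w. (Zv w, Yv w)) (count_space UNIV \<Otimes>\<^sub>M borel)
        (\<lambda>w. (Uv w, Dv w, RDv w)) \<and>
      (\<forall>d. cprob P RYv (\<lambda>w. Uv w = Complier \<and> Dv w = d \<and> RDv w) > 0)) \<and>
  cace_identifiable (\<lambda>P. base_model P \<and> binary_Y P \<and> two_sided P \<and>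
      cond_indep P RYv (count_space UNIV) (\<lambda>w. (Zv w, Uv w)) (count_space UNIV)
        (\<lambda>w. (Dv w, Yv w, RDv w)) \<and>
      (\<forall>d. \<forall>y \<in> {0, 1}. cprob P RYv (\<lambda>w. Dv w = d \<and> Yv w = y \<and> RDv w) > 0) \<and>
      (\<forall>d. \<not> indep_given P Yv borel Zv (count_space UNIV) (\<lambda>w. Dv w = d \<and> RDv w))) \<and>
  cace_identifiable (\<lambda>P. base_model P \<and> binary_Y P \<and> two_sided P \<and>
      cond_indep P RYv (count_space UNIV) (\<lambda>w. (Uv w, Dv w)) (count_space UNIV)
        (\<lambda>w. (Zv w, Yv w, RDv w)) \<and>
      (\<forall>z. \<forall>y \<in> {0, 1}. cprob P RYv (\<lambda>w. Zv w = z \<and> Yv w = y \<and> RDv w) > 0) \<and>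
      (\<forall>z. \<not> indep_given P Yv borel Dv (count_space UNIV) (\<lambda>w. Zv w = z \<and> RDv w))) \<and>
  cace_identifiable (\<lambda>P. base_model P \<and> binary_Y P \<and>
      cond_indep P RYv (count_space UNIV) (\<lambda>w. (Zv w, Dv w)) (count_space UNIV)
        (\<lambda>w. (Uv w, Yv w, RDv w)) \<and>
      (\<forall>y \<in> {0, 1}. cprob P RYv (\<lambda>w. Uv w = Complier \<and> Yv w = y \<and> RDv w) > 0))"
  by (intro conjI id1 id2 id3 id4 id5)

end
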